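(* Let $n\geqslant 3$, $N=2^n-1$, and let $F(\mathbf{1})$ be the value at $\mathbf{s}=(1,\dots,1)$ of the holomorphic continuation of $F(\mathbf{s})=G(\mathbf{s})\prod_{h=1}^N\zeta(s_h)^{-1}$. Then $$F(\mathbf{1})=\prod_p\left(1-\frac1p\right)^{2^n-1}\left(1+\sum_{k\geqslant 1}\frac{(k+1)^n-k^n}{p^k}\right).$$
   Context: $G(\mathbf{s})=\sum_{\mathbf{z}}\prod_{h=1}^Nz_h^{-s_h}$, the sum over $N$-tuples $\mathbf{z}$ of positive integers which are reduced: writing $h=\sum_j\varepsilon_j(h)2^{j-1}$ with $\varepsilon_j(h)\in\{0,1\}$ and $h\preceq\ell$ iff $\varepsilon_j(h)\leqslant\varepsilon_j(\ell)$ for all $j$, one requires $\gcd(z_h,z_\ell)=1$ whenever $h,\ell$ are $\preceq$-incomparable. $G$ converges for $\mathrm{Re}(s_h)>1$ and $F$ extends holomorphically to $\mathrm{Re}(s_h)>1/2$. The product is over primes $p$. *)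

theory Defs
  imports "HOL-Analysis.Analysis"
begin

definition bit_le :: "nat \<Rightarrow> nat \<Rightarrow> bool" where
  "bit_le h l \<longleftrightarrow> (\<forall>j. bit h j \<longrightarrow> bit l j)"

definition reduced_tuples :: "nat \<Rightarrow> (nat \<Rightarrow> nat) set" where
  "reduced_tuples N = {z. (\<forall>h\<in>{1..N}. z h \<ge> 1) \<and> (\<forall>h. h \<notin> {1..N} \<longrightarrow> z h = 0) \<and>
     (\<forall>h\<in>{1..N}. \<forall>l\<in>{1..N}. \<not> bit_le h l \<and> \<not> bit_le l h \<longrightarrow> coprime (z h) (z l))}"

definition G_series :: "nat \<Rightarrow> (nat \<Rightarrow> complex) \<Rightarrow> complex" where
  "G_series N s = (\<Sum>\<^sub>\<infinity> z \<in> reduced_tuples N. \<Prod>h\<in>{1..N}. of_nat (z h) powr (- s h))"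

text \<open>Riemann zeta function given by its Dirichlet series (used only for Re s > 1).\<close>
definition zeta_series :: "complex \<Rightarrow> complex" where
  "zeta_series s = (\<Sum>\<^sub>\<infinity> m \<in> {1::nat..}. of_nat m powr (- s))"

definition F_series :: "nat \<Rightarrow> (nat \<Rightarrow> complex) \<Rightarrow> complex" where
  "F_series N s = G_series N s * (\<Prod>h\<in>{1..N}. inverse (zeta_series (s h)))"

definition half_region :: "nat \<Rightarrow> real \<Rightarrow> (nat \<Rightarrow> complex) set" where
  "half_region N a = {s. (\<forall>h\<in>{1..N}. Re (s h) > a) \<and> (\<forall>h. h \<notin> {1..N} \<longrightarrow> s h = 0)}"

text \<open>Holomorphic in several variables on an open set: continuous and
  holomorphic in each variable separately (equivalent by Osgood's lemma).\<close>
definition multi_holomorphic_on ::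
  "nat \<Rightarrow> ((nat \<Rightarrow> complex) \<Rightarrow> complex) \<Rightarrow> real \<Rightarrow> bool" where
  "multi_holomorphic_on N f a \<longleftrightarrow> continuous_on (half_region N a) f \<and>
     (\<forall>s\<in>half_region N a. \<forall>h\<in>{1..N}.
        (\<lambda>w. f (s(h := w))) holomorphic_on {w. Re w > a})"

definition one_point :: "nat \<Rightarrow> nat \<Rightarrow> complex" where
  "one_point N h = (if h \<in> {1..N} then 1 else 0)"

definition euler_factor :: "nat \<Rightarrow> nat \<Rightarrow> real" where
  "euler_factor n p = (1 - 1 / real p) ^ (2 ^ n - 1) *
     (1 + (\<Sum>\<^sub>\<infinity> k \<in> {1::nat..}. (real (k + 1) ^ n - real k ^ n) / real p ^ k))"

end

theory Submission
  imports Defs "HOL-Complex_Analysis.Complex_Analysis"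
begin

lemma uconv_prod_Mtest:
  fixes f :: "nat \<Rightarrow> 'a::topological_space \<Rightarrow> complex"
  assumes M: "\<And>k x. x \<in> A \<Longrightarrow> norm (f k x - 1) \<le> M k" and sM: "summable M"
  shows "uniformly_convergent_on A (\<lambda>n x. \<Prod>k<n. f k x)"
proof (rule uniformly_convergent_prod_Cauchy)
  have M0: "M k \<ge> 0" if "x \<in> A" for k x using M[OF that, of k] norm_ge_zero order_trans by blast
  fix x m assume x: "x \<in> A"
  have "norm (\<Prod>k<m. f k x) = (\<Prod>k<m. norm (1 + (f k x - 1)))"
    by (simp add: prod_norm)
  also have "\<dots> \<le> (\<Prod>k<m. 1 + norm (f k x - 1))"
  proof (intro prod_mono conjI norm_ge_zero)
    fix k show "norm (1 + (f k x - 1)) \<le> 1 + norm (f k x - 1)"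
      using norm_triangle_ineq[of 1 "f k x - 1"] by simp
  qed
  also have "\<dots> \<le> exp (\<Sum>k<m. norm (f k x - 1))"
    by (rule prod_le_exp_sum) auto
  also have "(\<Sum>k<m. norm (f k x - 1)) \<le> (\<Sum>k<m. M k)"
    by (intro sum_mono M x)
  also have "(\<Sum>k<m. M k) \<le> suminf M"
    using sM M0[OF x] by (intro sum_le_suminf) auto
  finally show "norm (\<Prod>k<m. f k x) \<le> exp (suminf M)" by simp
next
  fix e :: real assume e: "e > 0"
  show "\<exists>K. \<forall>x\<in>A. \<forall>m\<ge>K. \<forall>n\<ge>m. dist (\<Prod>k = m..n. f k x) 1 < e"
  proof (cases "A = {}")
    case True then show ?thesis by auto
  next
    case False
    then obtain x0 where x0: "x0 \<in> A" by auto
    have M0: "M k \<ge> 0" for k using M[OF x0, of k] norm_ge_zero order_trans by blast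
    have "ln (1 + e) > 0" using e by simp
    from suminf_exist_split[OF this sM] obtain K where
      K: "\<And>n. n \<ge> K \<Longrightarrow> norm (\<Sum>i. M (i + n)) < ln (1 + e)" by blast
    show ?thesis
    proof (intro exI[of _ K] ballI allI impI)
      fix x m n assume x: "x \<in> A" and mn: "K \<le> m" "m \<le> n"
      have sMm: "summable (\<lambda>i. M (i + m))" using sM by (simp add: summable_iff_shift)
      have "(\<Sum>k=m..n. norm (f k x - 1)) \<le> (\<Sum>k=m..n. M k)"
        by (intro sum_mono M x)
      also have "(\<Sum>k=m..n. M k) = (\<Sum>i<Suc (n - m). M (i + m))"
        using mn by (intro sum.reindex_bij_witness[of _ "\<lambda>k. k + m" "\<lambda>k. k - m"]) auto
      also have "\<dots> \<le> (\<Sum>i. M (i + m))"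
        using sMm M0 by (intro sum_le_suminf) auto
      also have "\<dots> < ln (1 + e)" using K[of m] mn by simp
      finally have *: "(\<Sum>k=m..n. norm (f k x - 1)) < ln (1 + e)" .
      have "dist (\<Prod>k=m..n. f k x) 1 = norm ((\<Prod>k=m..n. 1 + (f k x - 1)) - 1)"
        by (simp add: dist_norm)
      also have "\<dots> \<le> (\<Prod>k=m..n. 1 + norm (f k x - 1)) - 1"
        by (rule norm_prod_minus1_le_prod_minus1)
      also have "(\<Prod>k=m..n. 1 + norm (f k x - 1)) \<le> exp (\<Sum>k=m..n. norm (f k x - 1))"
        by (rule prod_le_exp_sum) auto
      also have "exp (\<Sum>k=m..n. norm (f k x - 1)) < 1 + e"
        using * e by (metis exp_less_mono exp_ln add_pos_pos zero_less_one)
      finally show "dist (\<Prod>k = m..n. f k x) 1 < e" by simp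
    qed
  qed
qed

lemma infsum_exhaust_tendsto:
  fixes f :: "'a \<Rightarrow> complex"
  assumes sf: "(\<lambda>a. norm (f a)) summable_on A"
    and sub: "\<And>x. B x \<subseteq> A"
    and ev: "\<And>a. a \<in> A \<Longrightarrow> eventually (\<lambda>x. a \<in> B x) F"
  shows "((\<lambda>x. infsum f (B x)) \<longlongrightarrow> infsum f A) F"
proof (rule tendstoI)
  fix e :: real assume e: "e > 0"
  have hs: "((\<lambda>a. norm (f a)) has_sum infsum (\<lambda>a. norm (f a)) A) A"
    using sf by (simp add: summable_iff_has_sum_infsum)
  then have "eventually (\<lambda>S. dist (sum (\<lambda>a. norm (f a)) S) (infsum (\<lambda>a. norm (f a)) A) < e)
         (finite_subsets_at_top A)"
    unfolding has_sum_def using e tendstoD by blast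
  then obtain S where S: "finite S" "S \<subseteq> A"
    and Sd: "dist (sum (\<lambda>a. norm (f a)) S) (infsum (\<lambda>a. norm (f a)) A) < e"
    unfolding eventually_finite_subsets_at_top by blast
  have evS: "eventually (\<lambda>x. S \<subseteq> B x) F"
    using S by (induction S rule: finite_induct) (auto intro: eventually_conj ev)
  show "eventually (\<lambda>x. dist (infsum f (B x)) (infsum f A) < e) F"
    using evS
  proof eventually_elim
    case (elim x)
    have sfA: "f summable_on A" using sf abs_summable_summable by blast
    have sfB: "f summable_on B x" using summable_on_subset_banach[OF sfA sub] .
    have snA: "(\<lambda>a. norm (f a)) summable_on A - S" using sf summable_on_subset_banach by blast
    have "infsum f A - infsum f (B x) = infsum f (A - B x)"
      using infsum_Diff[OF sfA sfB sub[of x]] by simp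
    then have "dist (infsum f (B x)) (infsum f A) = norm (infsum f (A - B x))"
      by (simp add: dist_norm norm_minus_commute)
    also have "\<dots> \<le> infsum (\<lambda>a. norm (f a)) (A - B x)"
      by (rule norm_infsum_bound) (use sf summable_on_subset_banach in blast)
    also have "\<dots> \<le> infsum (\<lambda>a. norm (f a)) (A - S)"
    proof (intro infsum_mono_neutral snA)
      show "(\<lambda>a. norm (f a)) summable_on A - B x" using sf by (rule summable_on_subset_banach) auto
    qed (use elim in auto)
    also have "\<dots> = infsum (\<lambda>a. norm (f a)) A - sum (\<lambda>a. norm (f a)) S"
      using infsum_Diff[OF sf _ S(2)] S by simp
    also have "\<dots> < e" using Sd by (simp add: dist_norm)
    finally show ?case .
  qed
qed

definition ichain :: "nat \<Rightarrow> nat set \<Rightarrow> bool" where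
  "ichain N C \<longleftrightarrow> C \<subseteq> {1..N} \<and> (\<forall>h\<in>C. \<forall>l\<in>C. bit_le h l \<or> bit_le l h)"

definition Lpoly :: "nat \<Rightarrow> (nat \<Rightarrow> complex) \<Rightarrow> complex" where
  "Lpoly N y = (\<Sum>C\<in>{C. ichain N C}. (\<Prod>h\<in>C. y h) * (\<Prod>h\<in>{1..N} - C. 1 - y h))"

definition Lfac :: "nat \<Rightarrow> (nat \<Rightarrow> complex) \<Rightarrow> nat \<Rightarrow> complex" where
  "Lfac N s p = (if prime p then Lpoly N (\<lambda>h. of_nat p powr (- s h)) else 1)"

definition Fc :: "nat \<Rightarrow> (nat \<Rightarrow> complex) \<Rightarrow> complex" where
  "Fc N s = lim (\<lambda>n. \<Prod>k<n. Lfac N s k)"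

lemma bit_le_refl: "bit_le h h" by (simp add: bit_le_def)

lemma ichain_sub: "{C. ichain N C} \<subseteq> Pow {1..N}" by (auto simp: ichain_def)
lemma finite_ichain: "finite {C. ichain N C}"
  using ichain_sub by (rule finite_subset) auto

lemma Lpoly_bound:
  assumes y: "\<And>h. h \<in> {1..N} \<Longrightarrow> norm (y h) \<le> r" and r: "0 \<le> r" "r \<le> 1"
  shows "norm (Lpoly N y - 1) \<le> 4 ^ N * r^2"
proof -
  let ?t = "\<lambda>C. (\<Prod>h\<in>C. y h) * (\<Prod>h\<in>{1..N} - C. 1 - y h)"
  have one: "(\<Sum>C\<in>Pow {1..N}. ?t C) = 1"
    using prod_add[of "{1..N}" y "\<lambda>h. 1 - y h"] by simp
  have split: "(\<Sum>C\<in>Pow {1..N}. ?t C) = Lpoly N y + (\<Sum>C\<in>Pow {1..N} - {C. ichain N C}. ?t C)"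
    unfolding Lpoly_def using ichain_sub
    by (subst sum.subset_diff[of "{C. ichain N C}"]) auto
  have "norm (Lpoly N y - 1) = norm (\<Sum>C\<in>Pow {1..N} - {C. ichain N C}. ?t C)"
  proof -
    have "1 - Lpoly N y = (\<Sum>C\<in>Pow {1..N} - {C. ichain N C}. ?t C)"
      using one split by (simp add: algebra_simps)
    then show ?thesis by (metis norm_minus_commute)
  qed
  also have "\<dots> \<le> (\<Sum>C\<in>Pow {1..N} - {C. ichain N C}. r^2 * 2^N)"
  proof (rule sum_norm_le)
    fix C assume C: "C \<in> Pow {1..N} - {C. ichain N C}"
    then have CI: "C \<subseteq> {1..N}" by auto
    from C obtain h l where hl: "h \<in> C" "l \<in> C" "\<not> bit_le h l" "\<not> bit_le l h"
      by (auto simp: ichain_def)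
    then have hnl: "h \<noteq> l" using bit_le_refl by auto
    have finC: "finite C" using CI finite_subset by blast
    have "norm (\<Prod>h\<in>C. y h) = (\<Prod>h\<in>C. norm (y h))" by (simp add: prod_norm)
    also have "\<dots> = (\<Prod>x\<in>{h,l}. norm (y x)) * (\<Prod>x\<in>C - {h,l}. norm (y x))"
      using hl finC by (subst prod.subset_diff[of "{h,l}"]) auto
    also have "\<dots> \<le> (r * r) * 1"
    proof (intro mult_mono)
      show "(\<Prod>x\<in>{h,l}. norm (y x)) \<le> r * r"
        proof -
        have "norm (y h) \<le> r" "norm (y l) \<le> r" using y hl CI by auto
        then have "norm (y h) * norm (y l) \<le> r * r" by (simp add: mult_mono')
        then show ?thesis using hnl by simp
      qed
      show "(\<Prod>x\<in>C - {h,l}. norm (y x)) \<le> 1"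
      proof (intro prod_le_1 conjI norm_ge_zero)
        fix x assume "x \<in> C - {h,l}"
        then have "norm (y x) \<le> r" using y CI by auto
        then show "norm (y x) \<le> 1" using r by linarith
      qed
    qed (use r in \<open>auto intro: prod_nonneg\<close>)
    finally have n1: "norm (\<Prod>h\<in>C. y h) \<le> r^2" by (simp add: power2_eq_square)
    have "norm (\<Prod>h\<in>{1..N} - C. 1 - y h) = (\<Prod>h\<in>{1..N} - C. norm (1 - y h))" by (simp add: prod_norm)
    also have "\<dots> \<le> (\<Prod>h\<in>{1..N} - C. 2)"
    proof (intro prod_mono conjI norm_ge_zero)
      fix h assume "h \<in> {1..N} - C"
      then have "norm (y h) \<le> r" using y by auto
      then have "norm (y h) \<le> 1" using r by linarith
      then show "norm (1 - y h) \<le> 2" using norm_triangle_ineq4[of 1 "y h"] by simp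
    qed
    also have "\<dots> = 2 ^ card ({1..N} - C)" by simp
    also have "\<dots> \<le> 2 ^ N"
    proof (intro power_increasing)
      have "card ({1..N} - C) \<le> card {1..N}" by (intro card_mono) auto
      then show "card ({1..N} - C) \<le> N" by simp
    qed auto
    finally have n2: "norm (\<Prod>h\<in>{1..N} - C. 1 - y h) \<le> 2 ^ N" .
    show "norm (?t C) \<le> r^2 * 2^N"
      unfolding norm_mult using n1 n2 by (intro mult_mono) auto
  qed
  also have "\<dots> = real (card (Pow {1..N} - {C. ichain N C})) * (r^2 * 2^N)" by simp
  also have "\<dots> \<le> real (card (Pow {1..N})) * (r^2 * 2^N)"
    by (intro mult_right_mono) (auto intro: card_mono)
  also have "\<dots> = 4 ^ N * r^2"
  proof -
    have "(4::real)^N = 2^N * 2^N" by (simp add: power_mult_distrib[symmetric])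
    then show ?thesis by (simp add: card_Pow)
  qed
  finally show ?thesis .
qed

lemma cpow_eq: "p > 0 \<Longrightarrow> (of_nat p :: complex) powr z = exp (z * Ln (of_nat p))"
  by (simp add: powr_def)

lemma norm_cpow: "norm ((of_nat p :: complex) powr z) = real p powr Re z"
  by (subst norm_powr_real_powr) auto

lemma Lfac_bound:
  assumes sig: "\<sigma> > 0" and s: "\<And>h. h \<in> {1..N} \<Longrightarrow> Re (s h) \<ge> \<sigma>"
  shows "norm (Lfac N s k - 1) \<le> 4 ^ N * real k powr (- 2 * \<sigma>)"
proof (cases "prime k")
  case False then show ?thesis by (simp add: Lfac_def)
next
  case True
  then have k2: "real k \<ge> 2" using prime_ge_2_nat by auto
  let ?r = "real k powr (- \<sigma>)"
  have "norm (Lpoly N (\<lambda>h. of_nat k powr (- s h)) - 1) \<le> 4 ^ N * ?r^2"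
  proof (rule Lpoly_bound)
    fix h assume "h \<in> {1..N}"
    then show "norm (of_nat k powr (- s h) :: complex) \<le> ?r"
      using s k2 by (simp add: norm_cpow)
  next
    show "0 \<le> ?r" by simp
    have "1 \<le> real k powr \<sigma>" using k2 sig by (intro ge_one_powr_ge_zero) auto
    then show "?r \<le> 1" using le_imp_inverse_le[of 1 "real k powr \<sigma>"] by (simp add: powr_minus)
  qed
  also have "?r^2 = real k powr (- 2 * \<sigma>)"
    using k2 by (simp add: power2_eq_square powr_add[symmetric])
  finally show ?thesis using True by (simp add: Lfac_def)
qed

lemma summable_M:
  assumes "\<sigma> > 1/2"
  shows "summable (\<lambda>k. 4 ^ N * real k powr (- 2 * \<sigma>))"
  using assms by (intro summable_mult) (simp add: summable_real_powr_iff)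

lemma Fc_uconv:
  fixes A :: "'a::topological_space set"
  assumes "\<sigma> > 1/2" and "\<And>x h. x \<in> A \<Longrightarrow> h \<in> {1..N} \<Longrightarrow> Re (g x h) \<ge> \<sigma>"
  shows "uniform_limit A (\<lambda>n x. \<Prod>k<n. Lfac N (g x) k) (\<lambda>x. Fc N (g x)) sequentially"
proof -
  have "uniformly_convergent_on A (\<lambda>n x. \<Prod>k<n. Lfac N (g x) k)"
  proof (rule uconv_prod_Mtest[of A "\<lambda>k x. Lfac N (g x) k", OF _ summable_M[OF assms(1)]])
    fix k x assume x: "x \<in> A"
    show "norm (Lfac N (g x) k - 1) \<le> 4 ^ N * real k powr (- 2 * \<sigma>)"
      by (rule Lfac_bound) (use assms x in auto)
  qed
  then show ?thesis unfolding Fc_def uniformly_convergent_uniform_limit_iff .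
qed

lemma Lpoly_cont:
  assumes "\<And>h. continuous_on A (\<lambda>x. y x h)"
  shows "continuous_on A (\<lambda>x. Lpoly N (y x))"
  unfolding Lpoly_def by (intro continuous_intros assms)

lemma Lpoly_holo:
  assumes "\<And>h. (\<lambda>x. y x h) holomorphic_on A"
  shows "(\<lambda>x. Lpoly N (y x)) holomorphic_on A"
  unfolding Lpoly_def by (intro holomorphic_intros assms)

lemma Lfac_cont: "continuous_on A (\<lambda>s. s h) \<Longrightarrow> True" by simp

lemma cont_partial: "continuous_on A (\<lambda>s. \<Prod>k<n. Lfac N s k)"
proof -
  have "continuous_on A (\<lambda>s. Lfac N s k)" for k
  proof (cases "prime k")
    case True
    then have k: "k > 0" using prime_gt_0_nat by blast
    have "continuous_on A (\<lambda>s. Lpoly N (\<lambda>h. of_nat k powr (- s h)))"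
      unfolding cpow_eq[OF k]
      by (intro Lpoly_cont continuous_intros continuous_on_subset[OF continuous_on_product_coordinates]) auto
    then show ?thesis using True by (simp add: Lfac_def)
  qed (simp add: Lfac_def)
  then show ?thesis by (intro continuous_on_prod) auto
qed

lemma holo_partial:
  "(\<lambda>w. \<Prod>k<n. Lfac N (s(h := w)) k) holomorphic_on A"
proof -
  have "(\<lambda>w. Lfac N (s(h := w)) k) holomorphic_on A" for k
  proof (cases "prime k")
    case True
    have hh: "(\<lambda>w. (s(h := w)) l) holomorphic_on A" for l
      by (cases "l = h") auto
    have "(\<lambda>w. Lpoly N (\<lambda>l. of_nat k powr (- (s(h := w)) l))) holomorphic_on A"
      by (intro Lpoly_holo holomorphic_intros hh) 
    then show ?thesis using True by (simp add: Lfac_def)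
  qed (simp add: Lfac_def)
  then show ?thesis by (intro holomorphic_on_prod) auto
qed

lemma Re_dist_le: "Re w0 - Re w \<le> dist w0 w"
proof -
  have "Re w0 - Re w = Re (w0 - w)" by simp
  also have "\<dots> \<le> norm (w0 - w)" using complex_Re_le_cmod by blast
  finally show ?thesis by (simp add: dist_norm)
qed

lemma Fc_multi_holo: "multi_holomorphic_on N (Fc N) (1/2)"
  unfolding multi_holomorphic_on_def
proof (intro conjI ballI)
  show "continuous_on (half_region N (1/2)) (Fc N)"
  proof (rule continuous_at_imp_continuous_on, rule ballI)
    fix s0 assume s0: "s0 \<in> half_region N (1/2)"
    define m where "m = Min (insert 1 ((\<lambda>h. Re (s0 h)) ` {1..N}))"
    have m: "m > 1/2" unfolding m_def using s0 by (subst Min_gr_iff) (auto simp: half_region_def)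
    have mle: "m \<le> Re (s0 h)" if "h \<in> {1..N}" for h
      unfolding m_def using that by (intro Min_le) auto
    define \<sigma> where "\<sigma> = (1/2 + m) / 2"
    have sig: "\<sigma> > 1/2" "\<sigma> < m" using m by (auto simp: \<sigma>_def)
    define U where "U = (\<Inter>h\<in>{1..N}. {s. \<sigma> < Re (s h)})"
    have "open U" unfolding U_def
    proof (intro open_INT ballI finite_atLeastAtMost)
      fix h show "open {s::nat\<Rightarrow>complex. \<sigma> < Re (s h)}"
        by (intro open_Collect_less continuous_intros
              continuous_on_compose2[OF continuous_on_Re continuous_on_product_coordinates]) auto
    qed
    have s0U: "s0 \<in> U" unfolding U_def using mle sig by force
    have ul: "uniform_limit U (\<lambda>n x. \<Prod>k<n. Lfac N x k) (\<lambda>x. Fc N x) sequentially"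
    proof (rule Fc_uconv[OF sig(1)])
      fix x h assume "x \<in> U" "h \<in> {1..N}"
      then have "\<sigma> < Re (x h)" unfolding U_def by blast
      then show "\<sigma> \<le> Re (x h)" by simp
    qed
    have "continuous_on U (Fc N)"
      using uniform_limit_theorem[OF _ ul] cont_partial by (auto intro: always_eventually)
    then show "isCont (Fc N) s0" using \<open>open U\<close> s0U continuous_on_eq_continuous_at by blast
  qed
next
  fix s h assume s: "s \<in> half_region N (1/2)" and h: "h \<in> {1..N}"
  show "(\<lambda>w. Fc N (s(h := w))) holomorphic_on {w. 1/2 < Re w}"
  proof (rule holomorphic_uniform_sequence)
    show "open {w. 1/2 < Re w}" by (rule open_halfspace_Re_gt)
    show "(\<lambda>w. \<Prod>k<n. Lfac N (s(h := w)) k) holomorphic_on {w. 1/2 < Re w}" for n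
      by (rule holo_partial)
    fix w0 assume w0: "w0 \<in> {w. 1/2 < Re w}"
    define m where "m = Min (insert (Re w0) ((\<lambda>h. Re (s h)) ` {1..N}))"
    have m: "m > 1/2" unfolding m_def using s w0 by (subst Min_gr_iff) (auto simp: half_region_def)
    have mle: "m \<le> Re (s l)" if "l \<in> {1..N}" for l
      unfolding m_def using that by (intro Min_le) auto
    have mle0: "m \<le> Re w0" unfolding m_def by (intro Min_le) auto
    define \<sigma> where "\<sigma> = (1/2 + m) / 2"
    define d where "d = (m - \<sigma>) / 2"
    have sig: "\<sigma> > 1/2" "\<sigma> < m" "d > 0" using m by (auto simp: \<sigma>_def d_def)
    have Rew: "Re w \<ge> \<sigma> + d" if "w \<in> cball w0 d" for w
      using that Re_dist_le[of w0 w] mle0 unfolding d_def mem_cball by argo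
    show "\<exists>d>0. cball w0 d \<subseteq> {w. 1/2 < Re w} \<and>
            uniform_limit (cball w0 d) (\<lambda>n w. \<Prod>k<n. Lfac N (s(h := w)) k) (\<lambda>w. Fc N (s(h := w))) sequentially"
    proof (intro exI[of _ d] conjI)
      show "cball w0 d \<subseteq> {w. 1/2 < Re w}" using Rew sig by force
      show "uniform_limit (cball w0 d) (\<lambda>n w. \<Prod>k<n. Lfac N (s(h := w)) k) (\<lambda>w. Fc N (s(h := w))) sequentially"
      proof (rule Fc_uconv[OF sig(1)])
        fix w l assume "w \<in> cball w0 d" "l \<in> {1..N}"
        then show "\<sigma> \<le> Re ((s(h := w)) l)"
          using Rew[of w] mle[of l] sig by (cases "l = h") auto
      qed
    qed (use sig in auto)
  qed
qed

lemma PiE_has_sum: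
  fixes f :: "'a \<Rightarrow> nat \<Rightarrow> complex"
  assumes fin: "finite A" and s: "\<And>x. x \<in> A \<Longrightarrow> (\<lambda>k. norm (f x k)) summable_on B x"
  shows "((\<lambda>g. \<Prod>x\<in>A. f x (g x)) has_sum (\<Prod>x\<in>A. infsum (f x) (B x))) (PiE A B)"
    and "(\<lambda>g. norm (\<Prod>x\<in>A. f x (g x))) summable_on (PiE A B)"
proof -
  have old: "Infinite_Set_Sum.abs_summable_on (\<lambda>g. \<Prod>x\<in>A. f x (g x)) (PiE A B)"
  proof (rule abs_summable_on_prod_PiE[OF fin])
    fix x assume "x \<in> A"
    then show "Infinite_Set_Sum.abs_summable_on (f x) (B x)"
      using s[OF \<open>x \<in> A\<close>] by (simp add: abs_summable_equivalent[symmetric])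
  qed (auto intro: countableI_type)
  then show ns: "(\<lambda>g. norm (\<Prod>x\<in>A. f x (g x))) summable_on (PiE A B)"
    using old by (simp add: abs_summable_equivalent | metis abs_summable_equivalent | subst abs_summable_equivalent, assumption)
  then have "(\<lambda>g. \<Prod>x\<in>A. f x (g x)) summable_on (PiE A B)"
    by (rule abs_summable_summable)
  moreover have "infsum (\<lambda>g. \<Prod>x\<in>A. f x (g x)) (PiE A B) = (\<Prod>x\<in>A. infsum (f x) (B x))"
    by (rule infsum_prod_PiE_abs[OF fin]) (use s in auto)
  ultimately show "((\<lambda>g. \<Prod>x\<in>A. f x (g x)) has_sum (\<Prod>x\<in>A. infsum (f x) (B x))) (PiE A B)"
    by (metis summable_iff_has_sum_infsum)
qed

definition ext0 :: "nat set \<Rightarrow> (nat \<Rightarrow> nat) \<Rightarrow> nat \<Rightarrow> nat" where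
  "ext0 C f = (\<lambda>h. if h \<in> C then f h else 0)"

lemma bij_ext0:
  "bij_betw (ext0 C) (PiE C (\<lambda>_. B)) {a. (\<forall>h\<in>C. a h \<in> B) \<and> (\<forall>h. h \<notin> C \<longrightarrow> a h = 0)}"
proof (rule bij_betw_byWitness[of _ "\<lambda>a. restrict a C"])
  show "\<forall>f\<in>PiE C (\<lambda>_. B). restrict (ext0 C f) C = f"
    by (auto simp: ext0_def restrict_def PiE_def extensional_def fun_eq_iff)
  show "\<forall>a\<in>{a. (\<forall>h\<in>C. a h \<in> B) \<and> (\<forall>h. h \<notin> C \<longrightarrow> a h = 0)}. ext0 C (restrict a C) = a"
    by (auto simp: ext0_def fun_eq_iff)
  show "ext0 C ` PiE C (\<lambda>_. B) \<subseteq> {a. (\<forall>h\<in>C. a h \<in> B) \<and> (\<forall>h. h \<notin> C \<longrightarrow> a h = 0)}"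
    by (auto simp: ext0_def PiE_def)
  show "(\<lambda>a. restrict a C) ` {a. (\<forall>h\<in>C. a h \<in> B) \<and> (\<forall>h. h \<notin> C \<longrightarrow> a h = 0)} \<subseteq> PiE C (\<lambda>_. B)"
    by auto
qed

definition LV :: "nat \<Rightarrow> (nat \<Rightarrow> nat) set" where
  "LV N = {a. ichain N {h. 0 < a h}}"

lemma ichain_subset: "ichain N C \<Longrightarrow> D \<subseteq> C \<Longrightarrow> ichain N D"
  by (auto simp: ichain_def)

lemma local_has_sum:
  fixes y :: "nat \<Rightarrow> complex"
  assumes y: "\<And>h. h \<in> {1..N} \<Longrightarrow> norm (y h) < 1"
  shows "((\<lambda>a. \<Prod>h\<in>{1..N}. y h ^ a h) has_sum (\<Sum>C\<in>{C. ichain N C}. \<Prod>h\<in>C. y h / (1 - y h))) (LV N)"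
    and "(\<lambda>a. norm (\<Prod>h\<in>{1..N}. y h ^ a h)) summable_on (LV N)"
proof -
  define V where "V C = {a :: nat \<Rightarrow> nat. (\<forall>h\<in>C. a h \<in> {1::nat..}) \<and> (\<forall>h. h \<notin> C \<longrightarrow> a h = 0)}" for C :: "nat set"
  have LVU: "LV N = (\<Union>C\<in>{C. ichain N C}. V C)"
  proof (intro equalityI subsetI)
    fix a assume "a \<in> LV N"
    then have "ichain N {h. 0 < a h}" "a \<in> V {h. 0 < a h}" by (auto simp: LV_def V_def)
    then show "a \<in> (\<Union>C\<in>{C. ichain N C}. V C)" by blast
  next
    fix a assume "a \<in> (\<Union>C\<in>{C. ichain N C}. V C)"
    then obtain C where "ichain N C" "a \<in> V C" by blast
    moreover then have "{h. 0 < a h} = C" by (auto simp: V_def)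
    ultimately show "a \<in> LV N" by (simp add: LV_def)
  qed
  have disj: "V C \<inter> V C' = {}" if "C \<noteq> C'" for C C'
  proof -
    have "{h. 0 < a h} = C" if "a \<in> V C" for a C using that by (auto simp: V_def)
    then show ?thesis using \<open>C \<noteq> C'\<close> by blast
  qed
  have loc: "((\<lambda>a. \<Prod>h\<in>{1..N}. y h ^ a h) has_sum (\<Prod>h\<in>C. y h / (1 - y h))) (V C)
     \<and> (\<lambda>a. norm (\<Prod>h\<in>{1..N}. y h ^ a h)) summable_on (V C)" if C: "ichain N C" for C
  proof -
    have CI: "C \<subseteq> {1..N}" using C by (auto simp: ichain_def)
    have finC: "finite C" using CI finite_subset by blast
    have bij: "bij_betw (ext0 C) (PiE C (\<lambda>_. {1..})) (V C)"
      unfolding V_def by (rule bij_ext0)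
    have eq: "(\<Prod>h\<in>{1..N}. y h ^ ext0 C f h) = (\<Prod>h\<in>C. y h ^ f h)" for f
    proof -
      have "(\<Prod>h\<in>{1..N}. y h ^ ext0 C f h) = (\<Prod>h\<in>C. y h ^ ext0 C f h)"
        using CI by (intro prod.mono_neutral_right) (auto simp: ext0_def)
      also have "\<dots> = (\<Prod>h\<in>C. y h ^ f h)" by (intro prod.cong) (auto simp: ext0_def)
      finally show ?thesis .
    qed
    have geo: "((\<lambda>k. y h ^ k) has_sum (y h / (1 - y h))) {1..}" if "h \<in> C" for h
      using y[of h] that CI by (intro has_sum_geometric_from_1) auto
    have ngeo: "(\<lambda>k. norm (y h ^ k)) summable_on {1..}" if "h \<in> C" for h
    proof -
      have hI: "h \<in> {1..N}" using that CI by blast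
      have "(\<lambda>k. (norm (y h)) ^ k) summable_on {1::nat..}"
        using has_sum_geometric_from_1[of "norm (y h)"] y[OF hI] by (auto simp: summable_on_def)
      then show ?thesis by (simp add: norm_power)
    qed
    have h1: "((\<lambda>g. \<Prod>h\<in>C. y h ^ g h) has_sum (\<Prod>h\<in>C. infsum (\<lambda>k. y h ^ k) {1..})) (PiE C (\<lambda>_. {1..}))"
      and h2: "(\<lambda>g. norm (\<Prod>h\<in>C. y h ^ g h)) summable_on (PiE C (\<lambda>_. {1..}))"
      using PiE_has_sum[OF finC, of "\<lambda>h k. y h ^ k" "\<lambda>_. {1..}"] ngeo by auto
    have pe: "(\<Prod>h\<in>C. infsum (\<lambda>k. y h ^ k) {1..}) = (\<Prod>h\<in>C. y h / (1 - y h))"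
      using geo by (intro prod.cong refl) (simp add: infsumI)
    have "((\<lambda>g. \<Prod>h\<in>{1..N}. y h ^ ext0 C g h) has_sum (\<Prod>h\<in>C. y h / (1 - y h))) (PiE C (\<lambda>_. {1..}))"
      unfolding eq using h1 unfolding pe .
    then have A: "((\<lambda>a. \<Prod>h\<in>{1..N}. y h ^ a h) has_sum (\<Prod>h\<in>C. y h / (1 - y h))) (V C)"
      using has_sum_reindex_bij_betw[OF bij, of "\<lambda>a. \<Prod>h\<in>{1..N}. y h ^ a h"] by simp
    have "(\<lambda>g. norm (\<Prod>h\<in>{1..N}. y h ^ ext0 C g h)) summable_on (PiE C (\<lambda>_. {1..}))"
      unfolding eq by (rule h2)
    then have B: "(\<lambda>a. norm (\<Prod>h\<in>{1..N}. y h ^ a h)) summable_on (V C)"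
      using summable_on_reindex_bij_betw[OF bij, of "\<lambda>a. norm (\<Prod>h\<in>{1..N}. y h ^ a h)"] by simp
    from A B show ?thesis by blast
  qed
  show "((\<lambda>a. \<Prod>h\<in>{1..N}. y h ^ a h) has_sum (\<Sum>C\<in>{C. ichain N C}. \<Prod>h\<in>C. y h / (1 - y h))) (LV N)"
    unfolding LVU by (rule sum_has_sum[OF finite_ichain]) (use loc disj in auto)
  show "(\<lambda>a. norm (\<Prod>h\<in>{1..N}. y h ^ a h)) summable_on (LV N)"
    unfolding LVU by (rule summable_on_finite_union_disjoint[OF finite_ichain]) (use loc disj in auto)
qed

lemma Lpoly_eq_local:
  fixes y :: "nat \<Rightarrow> complex"
  assumes y: "\<And>h. h \<in> {1..N} \<Longrightarrow> y h \<noteq> 1"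
  shows "Lpoly N y = (\<Sum>C\<in>{C. ichain N C}. \<Prod>h\<in>C. y h / (1 - y h)) * (\<Prod>h\<in>{1..N}. 1 - y h)"
  unfolding Lpoly_def sum_distrib_right
proof (rule sum.cong[OF refl])
  fix C assume "C \<in> {C. ichain N C}"
  then have CI: "C \<subseteq> {1..N}" by (auto simp: ichain_def)
  have "(\<Prod>h\<in>{1..N}. 1 - y h) = (\<Prod>h\<in>C. 1 - y h) * (\<Prod>h\<in>{1..N} - C. 1 - y h)"
    using prod.subset_diff[OF CI finite_atLeastAtMost, of "\<lambda>h. 1 - y h"] by (simp add: mult.commute)
  moreover have "(\<Prod>h\<in>C. y h / (1 - y h)) * (\<Prod>h\<in>C. 1 - y h) = (\<Prod>h\<in>C. y h)"
    unfolding prod.distrib[symmetric] using y CI by (intro prod.cong) auto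
  ultimately show "(\<Prod>h\<in>C. y h) * (\<Prod>h\<in>{1..N} - C. 1 - y h) =
      (\<Prod>h\<in>C. y h / (1 - y h)) * (\<Prod>h\<in>{1..N}. 1 - y h)"
    by (simp add: mult.assoc)
qed

definition Ps :: "nat \<Rightarrow> nat set" where "Ps x = {p. prime p \<and> p < x}"

lemma finite_Ps: "finite (Ps x)" by (auto simp: Ps_def)
lemma prime_Ps: "p \<in> Ps x \<Longrightarrow> prime p" by (auto simp: Ps_def)

definition Phi :: "nat \<Rightarrow> nat set \<Rightarrow> (nat \<Rightarrow> nat \<Rightarrow> nat) \<Rightarrow> nat \<Rightarrow> nat" where
  "Phi N P \<alpha> = (\<lambda>h. if h \<in> {1..N} then \<Prod>p\<in>P. p ^ \<alpha> p h else 0)"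

definition Rsm :: "nat \<Rightarrow> nat \<Rightarrow> (nat \<Rightarrow> nat) set" where
  "Rsm N x = {z \<in> reduced_tuples N. \<forall>h\<in>{1..N}. \<forall>q. prime q \<longrightarrow> q dvd z h \<longrightarrow> q < x}"

lemma prodpow_pos: "(\<forall>p\<in>P. prime p) \<Longrightarrow> (\<Prod>p\<in>P. p ^ e p) > (0::nat)"
  by (intro prod_pos) (auto simp: prime_gt_0_nat)

lemma mult_prodpow:
  assumes "finite P" "\<forall>p\<in>P. prime p" "prime (q::nat)"
  shows "multiplicity q (\<Prod>p\<in>P. p ^ e p) = (if q \<in> P then e q else 0)"
  using assms by (intro multiplicity_prod_prime_powers) auto

lemma dvd_prodpow:
  assumes "finite P" "\<forall>p\<in>P. prime p" "prime (q::nat)" "q dvd (\<Prod>p\<in>P. p ^ e p)"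
  shows "q \<in> P \<and> e q > 0"
proof -
  have "0 < multiplicity q (\<Prod>p\<in>P. p ^ e p)"
    using assms prodpow_pos[of P e] by (subst prime_multiplicity_gt_zero_iff) auto
  then show ?thesis using mult_prodpow[OF assms(1-3)] by (auto split: if_splits)
qed

lemma factor_over:
  assumes "finite P" "z > (0::nat)" "\<And>q. prime q \<Longrightarrow> q dvd z \<Longrightarrow> q \<in> P" "\<forall>p\<in>P. prime p"
  shows "(\<Prod>p\<in>P. p ^ multiplicity p z) = z"
proof -
  have sub: "prime_factors z \<subseteq> P" using assms(3) by (auto simp: prime_factors_dvd)
  have "(\<Prod>p\<in>P. p ^ multiplicity p z) = (\<Prod>p\<in>prime_factors z. p ^ multiplicity p z)"
  proof (rule prod.mono_neutral_right[OF assms(1) sub])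
    show "\<forall>i\<in>P - prime_factors z. i ^ multiplicity i z = 1"
      using assms(4) by (auto simp: prime_factors_multiplicity)
  qed
  also have "\<dots> = z" using prime_factorization_nat[OF assms(2)] by simp
  finally show ?thesis .
qed

lemma bij_Phi: "bij_betw (Phi N (Ps x)) (PiE (Ps x) (\<lambda>_. LV N)) (Rsm N x)"
proof (rule bij_betw_byWitness[of _ "\<lambda>z. \<lambda>p\<in>Ps x. \<lambda>h. if h \<in> {1..N} then multiplicity p (z h) else 0"])
  let ?P = "Ps x"
  have fP: "finite ?P" and pP: "\<forall>p\<in>?P. prime p" by (auto simp: finite_Ps prime_Ps)
  show "\<forall>\<alpha>\<in>PiE ?P (\<lambda>_. LV N). (\<lambda>p\<in>?P. \<lambda>h. if h \<in> {1..N} then multiplicity p (Phi N ?P \<alpha> h) else 0) = \<alpha>"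
  proof
    fix \<alpha> assume a: "\<alpha> \<in> PiE ?P (\<lambda>_. LV N)"
    show "(\<lambda>p\<in>?P. \<lambda>h. if h \<in> {1..N} then multiplicity p (Phi N ?P \<alpha> h) else 0) = \<alpha>"
    proof (rule ext)
      fix p show "(\<lambda>p\<in>?P. \<lambda>h. if h \<in> {1..N} then multiplicity p (Phi N ?P \<alpha> h) else 0) p = \<alpha> p"
      proof (cases "p \<in> ?P")
        case False then show ?thesis using a by (auto simp: PiE_def extensional_def)
      next
        case True
        then have lv: "\<alpha> p \<in> LV N" using a by auto
        have out: "\<alpha> p h = 0" if "h \<notin> {1..N}" for h
          using lv that by (auto simp: LV_def ichain_def)
        show ?thesis using True out mult_prodpow[OF fP pP prime_Ps[OF True]]
          by (auto simp: Phi_def fun_eq_iff)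
      qed
    qed
  qed
  show "\<forall>z\<in>Rsm N x. Phi N ?P (\<lambda>p\<in>?P. \<lambda>h. if h \<in> {1..N} then multiplicity p (z h) else 0) = z"
  proof
    fix z assume z: "z \<in> Rsm N x"
    show "Phi N ?P (\<lambda>p\<in>?P. \<lambda>h. if h \<in> {1..N} then multiplicity p (z h) else 0) = z"
    proof (rule ext)
      fix h show "Phi N ?P (\<lambda>p\<in>?P. \<lambda>h. if h \<in> {1..N} then multiplicity p (z h) else 0) h = z h"
      proof (cases "h \<in> {1..N}")
        case False then show ?thesis using z by (auto simp: Phi_def Rsm_def reduced_tuples_def)
      next
        case True
        have "1 \<le> z h" using z True unfolding Rsm_def reduced_tuples_def by blast
        then have zpos: "z h > 0" by simp
        have "(\<Prod>p\<in>?P. p ^ multiplicity p (z h)) = z h"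
        proof (rule factor_over[OF fP zpos _ pP])
          have sm: "\<forall>q. prime q \<longrightarrow> q dvd z h \<longrightarrow> q < x" using z True unfolding Rsm_def by blast
          fix q assume "prime q" "q dvd z h"
          then show "q \<in> ?P" using sm by (simp add: Ps_def)
        qed
        then show ?thesis using True by (simp add: Phi_def)
      qed
    qed
  qed
  show "Phi N ?P ` PiE ?P (\<lambda>_. LV N) \<subseteq> Rsm N x"
  proof (rule image_subsetI)
    fix \<alpha> assume a: "\<alpha> \<in> PiE ?P (\<lambda>_. LV N)"
    have dv: "q \<in> ?P \<and> \<alpha> q h > 0" if "prime q" "h \<in> {1..N}" "q dvd Phi N ?P \<alpha> h" for q h
      using dvd_prodpow[OF fP pP that(1), of "\<lambda>p. \<alpha> p h"] that by (simp add: Phi_def)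
    show "Phi N ?P \<alpha> \<in> Rsm N x"
      unfolding Rsm_def reduced_tuples_def
    proof (intro CollectI conjI ballI allI impI)
      fix h assume "h \<in> {1..N}"
      then show "1 \<le> Phi N ?P \<alpha> h" using prodpow_pos[OF pP] by (simp add: Phi_def Suc_le_eq)
    next
      fix h assume "h \<notin> {1..N}" then show "Phi N ?P \<alpha> h = 0" unfolding Phi_def by (simp only: if_False)
    next
      fix h l assume h: "h \<in> {1..N}" and l: "l \<in> {1..N}" and inc: "\<not> bit_le h l \<and> \<not> bit_le l h"
      show "coprime (Phi N ?P \<alpha> h) (Phi N ?P \<alpha> l)"
      proof (rule ccontr)
        assume "\<not> coprime (Phi N ?P \<alpha> h) (Phi N ?P \<alpha> l)"
        then have "gcd (Phi N ?P \<alpha> h) (Phi N ?P \<alpha> l) \<noteq> 1" by (simp add: coprime_iff_gcd_eq_1)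
        then obtain q where q: "prime q" "q dvd gcd (Phi N ?P \<alpha> h) (Phi N ?P \<alpha> l)"
          using prime_factor_nat by blast
        then have "q \<in> ?P \<and> \<alpha> q h > 0" "q \<in> ?P \<and> \<alpha> q l > 0"
          using dv[OF q(1) h] dv[OF q(1) l] by auto
        then have "ichain N {k. 0 < \<alpha> q k}" "h \<in> {k. 0 < \<alpha> q k}" "l \<in> {k. 0 < \<alpha> q k}"
          using a by (auto simp: LV_def)
        then show False using inc unfolding ichain_def by blast
      qed
    next
      fix h q assume h: "h \<in> {1..N}" and q: "prime q" "q dvd Phi N ?P \<alpha> h"
      then show "q < x" using dv[OF q(1) h q(2)] by (simp add: Ps_def)
    qed
  qed
  show "(\<lambda>z. \<lambda>p\<in>?P. \<lambda>h. if h \<in> {1..N} then multiplicity p (z h) else 0) ` Rsm N x \<subseteq> PiE ?P (\<lambda>_. LV N)"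
  proof (rule image_subsetI)
    fix z assume z: "z \<in> Rsm N x"
    show "(\<lambda>p\<in>?P. \<lambda>h. if h \<in> {1..N} then multiplicity p (z h) else 0) \<in> PiE ?P (\<lambda>_. LV N)"
    proof (rule restrict_PiE_iff[THEN iffD2], intro ballI)
      fix p assume p: "p \<in> ?P"
      then have pp: "prime p" by (rule prime_Ps)
      show "(\<lambda>h. if h \<in> {1..N} then multiplicity p (z h) else 0) \<in> LV N"
        unfolding LV_def ichain_def
      proof (intro CollectI conjI ballI subsetI)
        fix h assume "h \<in> {k. 0 < (if k \<in> {1..N} then multiplicity p (z k) else 0)}"
        then show "h \<in> {1..N}" by (auto split: if_splits)
      next
        fix h l assume h: "h \<in> {k. 0 < (if k \<in> {1..N} then multiplicity p (z k) else 0)}"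
          and l: "l \<in> {k. 0 < (if k \<in> {1..N} then multiplicity p (z k) else 0)}"
        have hI: "h \<in> {1..N}" and lI: "l \<in> {1..N}" using h l by (auto split: if_splits)
        have "1 \<le> z h" "1 \<le> z l" using z hI lI unfolding Rsm_def reduced_tuples_def by blast+
        then have zh: "z h \<noteq> 0" "z l \<noteq> 0" by auto
        have "p dvd z h" "p dvd z l"
          using h l hI lI zh pp by (auto simp: prime_multiplicity_gt_zero_iff)
        show "bit_le h l \<or> bit_le l h"
        proof (rule ccontr)
          assume "\<not> (bit_le h l \<or> bit_le l h)"
          then have "coprime (z h) (z l)" using z hI lI by (auto simp: Rsm_def reduced_tuples_def)
          then have "p = 1" using coprime_common_divisor_nat \<open>p dvd z h\<close> \<open>p dvd z l\<close> by blast
          then show False using pp by simp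
        qed
      qed
    qed
  qed
qed

lemma cpow_mult_nat: "(of_nat (a * b) :: complex) powr w = of_nat a powr w * of_nat b powr w"
proof -
  have "(of_nat (a * b) :: complex) powr w = (of_nat a * of_nat b) powr w" by (simp only: of_nat_mult)
  also have "\<dots> = of_nat a powr w * of_nat b powr w" by (rule powr_times_real) auto
  finally show ?thesis .
qed

lemma cpow_power_nat: "(of_nat (a ^ e) :: complex) powr w = (of_nat a powr w) ^ e"
proof (induction e)
  case 0 then show ?case by (simp add: powr_one_eq_one)
next
  case (Suc e)
  have "(of_nat (a ^ Suc e) :: complex) powr w = of_nat (a * a ^ e) powr w" by (simp only: power_Suc)
  also have "\<dots> = of_nat a powr w * of_nat (a ^ e) powr w" by (rule cpow_mult_nat)
  finally show ?case using Suc by simp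
qed

lemma cpow_prod_nat:
  assumes "finite P"
  shows "(of_nat (\<Prod>p\<in>P. f p) :: complex) powr w = (\<Prod>p\<in>P. of_nat (f p) powr w)"
  using assms
proof (induction P rule: finite_induct)
  case empty then show ?case by (simp add: powr_one_eq_one)
next
  case (insert x F)
  have "(of_nat (\<Prod>p\<in>insert x F. f p) :: complex) powr w = of_nat (f x * (\<Prod>p\<in>F. f p)) powr w"
    by (subst prod.insert) (use insert.hyps in auto)
  also have "\<dots> = of_nat (f x) powr w * of_nat (\<Prod>p\<in>F. f p) powr w" by (rule cpow_mult_nat)
  finally show ?case using insert by simp
qed

definition gt :: "nat \<Rightarrow> (nat \<Rightarrow> complex) \<Rightarrow> (nat \<Rightarrow> nat) \<Rightarrow> complex" where
  "gt N s z = (\<Prod>h\<in>{1..N}. of_nat (z h) powr (- s h))"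

definition wloc :: "nat \<Rightarrow> (nat \<Rightarrow> complex) \<Rightarrow> nat \<Rightarrow> (nat \<Rightarrow> nat) \<Rightarrow> complex" where
  "wloc N s p a = (\<Prod>h\<in>{1..N}. (of_nat p powr (- s h)) ^ a h)"

definition Gloc :: "nat \<Rightarrow> (nat \<Rightarrow> complex) \<Rightarrow> nat \<Rightarrow> complex" where
  "Gloc N s p = infsum (wloc N s p) (LV N)"

lemma gt_Phi: "finite P \<Longrightarrow> gt N s (Phi N P \<alpha>) = (\<Prod>p\<in>P. wloc N s p (\<alpha> p))"
proof -
  assume fP: "finite P"
  have "gt N s (Phi N P \<alpha>) = (\<Prod>h\<in>{1..N}. \<Prod>p\<in>P. (of_nat p powr (- s h)) ^ \<alpha> p h)"
    unfolding gt_def Phi_def using fP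
    by (intro prod.cong refl) (simp only: cpow_prod_nat cpow_power_nat if_True)
  also have "\<dots> = (\<Prod>p\<in>P. wloc N s p (\<alpha> p))"
    unfolding wloc_def by (rule prod.swap)
  finally show ?thesis .
qed

lemma norm_ploc_lt1:
  assumes "prime p" "Re w > 0"
  shows "norm ((of_nat p :: complex) powr (- w)) < 1"
proof -
  have p: "real p > 1" using assms prime_gt_1_nat by auto
  have "real p powr (- Re w) < 1" using p assms(2) by (intro powr_less_one) auto
  then show ?thesis by (simp add: norm_cpow)
qed

lemma wloc_sum:
  assumes "prime p" "\<And>h. h \<in> {1..N} \<Longrightarrow> Re (s h) > 0"
  shows "(wloc N s p has_sum (\<Sum>C\<in>{C. ichain N C}. \<Prod>h\<in>C. (of_nat p powr (- s h)) / (1 - of_nat p powr (- s h)))) (LV N)"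
    and "(\<lambda>a. norm (wloc N s p a)) summable_on LV N"
  unfolding wloc_def using local_has_sum[of N "\<lambda>h. of_nat p powr (- s h)"] norm_ploc_lt1 assms by auto

lemma Rsm_sum:
  assumes "\<And>h. h \<in> {1..N} \<Longrightarrow> Re (s h) > 0"
  shows "infsum (gt N s) (Rsm N x) = (\<Prod>p\<in>Ps x. Gloc N s p)"
proof -
  have "infsum (gt N s) (Rsm N x) = infsum (\<lambda>\<alpha>. gt N s (Phi N (Ps x) \<alpha>)) (PiE (Ps x) (\<lambda>_. LV N))"
    using infsum_reindex_bij_betw[OF bij_Phi, of "gt N s"] by simp
  also have "\<dots> = infsum (\<lambda>\<alpha>. \<Prod>p\<in>Ps x. wloc N s p (\<alpha> p)) (PiE (Ps x) (\<lambda>_. LV N))"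
    by (intro infsum_cong) (simp add: gt_Phi finite_Ps)
  also have "\<dots> = (\<Prod>p\<in>Ps x. infsum (wloc N s p) (LV N))"
    by (rule infsum_prod_PiE_abs[OF finite_Ps]) (use wloc_sum(2) assms prime_Ps in blast)
  finally show ?thesis by (simp add: Gloc_def)
qed

lemma norm_cpow_summable:
  assumes "Re w > 1"
  shows "(\<lambda>k. norm ((of_nat k :: complex) powr (- w))) summable_on {1..}"
proof -
  have "summable (\<lambda>k. real k powr (- Re w))" using assms by (simp add: summable_real_powr_iff)
  then have "(\<lambda>k. real k powr (- Re w)) summable_on UNIV"
    by (rule summable_nonneg_imp_summable_on) simp
  then have "(\<lambda>k. real k powr (- Re w)) summable_on {1..}"
    by (rule summable_on_subset_banach) simp
  then show ?thesis by (simp add: norm_cpow)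
qed

lemma gt_abs_summable:
  assumes s: "\<And>h. h \<in> {1..N} \<Longrightarrow> Re (s h) > 1"
  shows "(\<lambda>z. norm (gt N s z)) summable_on reduced_tuples N"
proof -
  define T where "T = {a::nat\<Rightarrow>nat. (\<forall>h\<in>{1..N}. a h \<in> {1..}) \<and> (\<forall>h. h \<notin> {1..N} \<longrightarrow> a h = 0)}"
  have bij: "bij_betw (ext0 {1..N}) (PiE {1..N} (\<lambda>_. {1..})) T"
    unfolding T_def by (rule bij_ext0)
  have eq: "gt N s (ext0 {1..N} f) = (\<Prod>h\<in>{1..N}. of_nat (f h) powr (- s h))" for f
    unfolding gt_def ext0_def by (intro prod.cong) auto
  have "(\<lambda>f. norm (\<Prod>h\<in>{1..N}. (\<lambda>h k. (of_nat k :: complex) powr (- s h)) h (f h))) summable_on (PiE {1..N} (\<lambda>_. {1..}))"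
  proof (rule PiE_has_sum(2)[OF finite_atLeastAtMost])
    fix h assume "h \<in> {1..N}"
    then show "(\<lambda>k. norm ((\<lambda>h k. (of_nat k :: complex) powr (- s h)) h k)) summable_on {1..}"
      using norm_cpow_summable[OF s] by simp
  qed
  then have "(\<lambda>f. norm (gt N s (ext0 {1..N} f))) summable_on (PiE {1..N} (\<lambda>_. {1..}))"
    unfolding eq by simp
  then have "(\<lambda>z. norm (gt N s z)) summable_on T"
    using summable_on_reindex_bij_betw[OF bij, of "\<lambda>z. norm (gt N s z)"] by simp
  moreover have "reduced_tuples N \<subseteq> T"
    by (auto simp: T_def reduced_tuples_def)
  ultimately show ?thesis by (rule summable_on_subset_banach)
qed

lemma prod_if_prime: "(\<Prod>k<n. if prime k then f k else 1) = (\<Prod>p\<in>Ps n. f p)"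
proof -
  have "(\<Prod>k<n. if prime k then f k else 1) = (\<Prod>k\<in>{k\<in>{..<n}. prime k}. f k)"
    by (rule prod.inter_filter[symmetric]) simp
  also have "{k\<in>{..<n}. prime k} = Ps n" by (auto simp: Ps_def)
  finally show ?thesis .
qed

lemma G_lim:
  assumes s: "\<And>h. h \<in> {1..N} \<Longrightarrow> Re (s h) > 1"
  shows "(\<lambda>n. \<Prod>k<n. if prime k then Gloc N s k else 1) \<longlonglongrightarrow> G_series N s"
proof -
  have s0: "\<And>h. h \<in> {1..N} \<Longrightarrow> Re (s h) > 0" using s by force
  have eq: "(\<Prod>k<n. if prime k then Gloc N s k else 1) = infsum (gt N s) (Rsm N n)" for n
    unfolding prod_if_prime using Rsm_sum[OF s0] by simp
  have G: "G_series N s = infsum (gt N s) (reduced_tuples N)"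
    unfolding G_series_def gt_def ..
  have "(\<lambda>n. infsum (gt N s) (Rsm N n)) \<longlonglongrightarrow> infsum (gt N s) (reduced_tuples N)"
  proof (rule infsum_exhaust_tendsto[OF gt_abs_summable[OF s]])
    show "Rsm N n \<subseteq> reduced_tuples N" for n by (auto simp: Rsm_def)
    fix z assume z: "z \<in> reduced_tuples N"
    show "eventually (\<lambda>n. z \<in> Rsm N n) sequentially"
      using eventually_gt_at_top[of "\<Sum>h\<in>{1..N}. z h"]
    proof eventually_elim
      case (elim n)
      show ?case unfolding Rsm_def
      proof (intro CollectI conjI z ballI allI impI)
        fix h q assume h: "h \<in> {1..N}" and q: "prime q" "q dvd z h"
        have "1 \<le> z h" using z h unfolding reduced_tuples_def by blast
        then have "q \<le> z h" using q(2) by (simp add: dvd_imp_le)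
        also have "z h \<le> (\<Sum>h\<in>{1..N}. z h)" using h by (intro member_le_sum) auto
        finally show "q < n" using elim by simp
      qed
    qed
  qed
  then show ?thesis unfolding eq G .
qed

lemma ichain1: "{C. ichain 1 C} = {{}, {1}}"
  by (auto simp: ichain_def bit_le_refl)

lemma Gloc_formula:
  assumes "prime p" "\<forall>h\<in>{1..N}. Re (s h) > 0"
  shows "Gloc N s p = (\<Sum>C\<in>{C. ichain N C}. \<Prod>h\<in>C. (of_nat p powr (- s h)) / (1 - of_nat p powr (- s h)))"
proof -
  have "(wloc N s p has_sum (\<Sum>C\<in>{C. ichain N C}. \<Prod>h\<in>C. (of_nat p powr (- s h)) / (1 - of_nat p powr (- s h)))) (LV N)"
    by (rule wloc_sum(1)[OF assms(1)]) (use assms(2) in auto)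
  then show ?thesis unfolding Gloc_def by (rule infsumI)
qed

lemma zeta_lim:
  assumes w: "Re w > 1"
  shows "(\<lambda>n. \<Prod>k<n. if prime k then 1 / (1 - of_nat k powr (- w)) else 1) \<longlonglongrightarrow> zeta_series w"
proof -
  define s1 where "s1 = (\<lambda>h::nat. w)"
  have s1: "\<And>h. h \<in> {1..1} \<Longrightarrow> Re (s1 h) > 1" using w by (simp add: s1_def)
  have loc: "Gloc 1 s1 k = 1 / (1 - of_nat k powr (- w))" if "prime k" for k
  proof -
    have y: "of_nat k powr (- w) \<noteq> (1::complex)"
      using norm_ploc_lt1[OF that, of w] w by auto
    have s10: "\<forall>h\<in>{1..1}. Re (s1 h) > 0" using w by (simp add: s1_def)
    have "Gloc 1 s1 k = 1 + of_nat k powr (- w) / (1 - of_nat k powr (- w))"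
      using Gloc_formula[OF that s10] unfolding ichain1 s1_def by simp
    also have "\<dots> = 1 / (1 - of_nat k powr (- w))" using y by (simp add: field_simps)
    finally show ?thesis .
  qed
  have "(\<lambda>n. \<Prod>k<n. if prime k then Gloc 1 s1 k else 1) \<longlonglongrightarrow> G_series 1 s1"
    by (rule G_lim) (use s1 in auto)
  moreover have "(\<Prod>k<n. if prime k then Gloc 1 s1 k else 1) =
      (\<Prod>k<n. if prime k then 1 / (1 - of_nat k powr (- w)) else 1)" for n
  proof (intro prod.cong refl)
    fix k show "(if prime k then Gloc 1 s1 k else 1) = (if prime k then 1 / (1 - of_nat k powr (- w)) else 1)"
      by (cases "prime k") (simp_all only: loc if_True if_False)
  qed
  moreover have "G_series 1 s1 = zeta_series w"
  proof -
    define emb where "emb m = (\<lambda>h::nat. if h = 1 then m else (0::nat))" for m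
    have bij: "bij_betw emb {1..} (reduced_tuples 1)"
    proof (rule bij_betw_byWitness[of _ "\<lambda>z. z 1"])
      show "\<forall>m\<in>{1..}. emb m 1 = m" by (simp add: emb_def)
      show "\<forall>z\<in>reduced_tuples 1. emb (z 1) = z"
        by (auto simp: emb_def reduced_tuples_def fun_eq_iff bit_le_refl)
      show "emb ` {1..} \<subseteq> reduced_tuples 1"
        by (auto simp: emb_def reduced_tuples_def bit_le_refl)
      show "(\<lambda>z. z 1) ` reduced_tuples 1 \<subseteq> {1..}"
        by (auto simp: reduced_tuples_def)
    qed
    have "G_series 1 s1 = infsum (\<lambda>z. of_nat (z 1) powr (- w)) (reduced_tuples 1)"
      unfolding G_series_def s1_def by simp
    also have "\<dots> = infsum (\<lambda>m. of_nat (emb m 1) powr (- w)) {1..}"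
      using infsum_reindex_bij_betw[OF bij, of "\<lambda>z. of_nat (z 1) powr (- w)"] by simp
    also have "\<dots> = zeta_series w" unfolding zeta_series_def by (simp add: emb_def)
    finally show ?thesis .
  qed
  ultimately show ?thesis by simp
qed

lemma conv_W:
  assumes "Re w > 1"
  shows "convergent (\<lambda>n. \<Prod>k<n. if prime k then 1 - (of_nat k :: complex) powr (- w) else 1)"
proof -
  have "uniformly_convergent_on {0::nat} (\<lambda>n (x::nat). \<Prod>k<n. if prime k then 1 - (of_nat k :: complex) powr (- w) else 1)"
  proof (rule uconv_prod_Mtest[of "{0::nat}" "\<lambda>k x. if prime k then 1 - (of_nat k :: complex) powr (- w) else 1"
          "\<lambda>k. real k powr (- Re w)"])
    fix k x show "norm ((if prime k then 1 - (of_nat k :: complex) powr (- w) else 1) - 1) \<le> real k powr (- Re w)"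
      by (auto simp: norm_cpow)
    show "summable (\<lambda>k. real k powr (- Re w))" using assms by (simp add: summable_real_powr_iff)
  qed
  then have "uniform_limit {0::nat} (\<lambda>n (x::nat). \<Prod>k<n. if prime k then 1 - (of_nat k :: complex) powr (- w) else 1)
       (\<lambda>x. lim (\<lambda>n. \<Prod>k<n. if prime k then 1 - (of_nat k :: complex) powr (- w) else 1)) sequentially"
    unfolding uniformly_convergent_uniform_limit_iff .
  from tendsto_uniform_limitI[OF this, of 0] show ?thesis
    unfolding convergent_def by auto
qed

lemma inv_zeta_lim:
  assumes w: "Re w > 1"
  shows "(\<lambda>n. \<Prod>k<n. if prime k then 1 - (of_nat k :: complex) powr (- w) else 1) \<longlonglongrightarrow> inverse (zeta_series w)"
proof -
  let ?W = "\<lambda>n. \<Prod>k<n. if prime k then 1 - (of_nat k :: complex) powr (- w) else 1"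
  let ?Z = "\<lambda>n. \<Prod>k<n. if prime k then 1 / (1 - of_nat k powr (- w)) else 1"
  obtain L where L: "?W \<longlonglongrightarrow> L" using conv_W[OF w] unfolding convergent_def by blast
  have ZW: "?Z n * ?W n = 1" for n
  proof -
    have "?Z n * ?W n = (\<Prod>k<n. (if prime k then 1 / (1 - of_nat k powr (- w)) else 1) *
                                  (if prime k then 1 - (of_nat k :: complex) powr (- w) else 1))"
      by (simp add: prod.distrib)
    also have "\<dots> = (\<Prod>k<n. 1)"
    proof (intro prod.cong refl)
      fix k show "(if prime k then 1 / (1 - of_nat k powr (- w)) else 1) *
                    (if prime k then 1 - (of_nat k :: complex) powr (- w) else 1) = 1"
      proof (cases "prime k")
        case True
        then have "of_nat k powr (- w) \<noteq> (1::complex)" using norm_ploc_lt1[OF True, of w] w by auto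
        then show ?thesis using True by (simp add: field_simps)
      qed simp
    qed
    finally show ?thesis by simp
  qed
  have "(\<lambda>n. ?Z n * ?W n) \<longlonglongrightarrow> zeta_series w * L"
    by (intro tendsto_mult zeta_lim[OF w] L)
  then have "zeta_series w * L = 1" unfolding ZW by (simp add: LIMSEQ_const_iff)
  then have "inverse (zeta_series w) = L" by (rule inverse_unique)
  then show ?thesis using L by simp
qed

lemma Fc_eq_F:
  assumes s: "s \<in> half_region N 1"
  shows "Fc N s = F_series N s"
proof -
  have s1: "\<And>h. h \<in> {1..N} \<Longrightarrow> Re (s h) > 1" using s by (auto simp: half_region_def)
  have s0: "\<And>h. h \<in> {1..N} \<Longrightarrow> Re (s h) > 0" using s1 by force
  have s0': "\<forall>h\<in>{1..N}. Re (s h) > 0" using s0 by blast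
  let ?A = "\<lambda>n. \<Prod>k<n. if prime k then Gloc N s k else 1"
  let ?W = "\<lambda>h n. \<Prod>k<n. if prime k then 1 - (of_nat k :: complex) powr (- s h) else 1"
  have fac: "Lfac N s k = (if prime k then Gloc N s k else 1) *
              (\<Prod>h\<in>{1..N}. if prime k then 1 - (of_nat k :: complex) powr (- s h) else 1)" for k
  proof (cases "prime k")
    case True
    have ne: "of_nat k powr (- s h) \<noteq> (1::complex)" if "h \<in> {1..N}" for h
      using norm_ploc_lt1[OF True s0[OF that]] by fastforce
    have "Lpoly N (\<lambda>h. of_nat k powr (- s h)) = Gloc N s k * (\<Prod>h\<in>{1..N}. 1 - of_nat k powr (- s h))"
      using Lpoly_eq_local[of N "\<lambda>h. of_nat k powr (- s h)"] ne unfolding Gloc_formula[OF True s0'] by blast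
    then show ?thesis using True by (simp add: Lfac_def)
  qed (simp add: Lfac_def)
  have P: "(\<Prod>k<n. Lfac N s k) = ?A n * (\<Prod>h\<in>{1..N}. ?W h n)" for n
    unfolding fac prod.distrib by (subst prod.swap) simp
  have "(\<lambda>n. ?A n * (\<Prod>h\<in>{1..N}. ?W h n)) \<longlonglongrightarrow> G_series N s * (\<Prod>h\<in>{1..N}. inverse (zeta_series (s h)))"
    by (intro tendsto_mult G_lim s1 tendsto_prod inv_zeta_lim) auto
  then have "(\<lambda>n. \<Prod>k<n. Lfac N s k) \<longlonglongrightarrow> F_series N s"
    unfolding P F_series_def .
  then show ?thesis unfolding Fc_def by (rule limI)
qed

definition Dn :: "nat \<Rightarrow> nat set" where "Dn h = {l. 1 \<le> l \<and> bit_le l h}"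
definition chs :: "nat set \<Rightarrow> nat set set" where
  "chs X = {C. C \<subseteq> X \<and> (\<forall>a\<in>C. \<forall>b\<in>C. bit_le a b \<or> bit_le b a)}"
definition cc :: "real \<Rightarrow> nat set \<Rightarrow> real" where "cc t X = (\<Sum>C\<in>chs X. t ^ card C)"
definition bits :: "nat \<Rightarrow> nat set" where "bits h = {j. bit h j}"

lemma bit_le_refl': "bit_le h h" by (simp add: bit_le_def)
lemma bit_le_trans: "bit_le a b \<Longrightarrow> bit_le b c \<Longrightarrow> bit_le a c" by (auto simp: bit_le_def)

lemma bit_le_imp_le: "bit_le l h \<Longrightarrow> l \<le> (h::nat)"
proof (induction h arbitrary: l rule: less_induct)
  case (less h)
  show ?case
  proof (cases "h = 0")
    case True
    have "l = 0"
    proof (rule bit_eqI)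
      fix n show "bit l n = bit (0::nat) n" using less.prems True by (auto simp: bit_le_def)
    qed
    then show ?thesis by simp
  next
    case False
    have "bit_le (l div 2) (h div 2)" using less.prems by (auto simp: bit_le_def bit_Suc[symmetric])
    then have a: "l div 2 \<le> h div 2" using less.IH[of "h div 2"] False by simp
    have b: "odd l \<longrightarrow> odd h" using less.prems by (auto simp: bit_le_def bit_0[symmetric])
    from a b show "l \<le> h" by presburger
  qed
qed

lemma bit_le_antisym: "bit_le a b \<Longrightarrow> bit_le b a \<Longrightarrow> a = (b::nat)"
  using bit_le_imp_le by (meson antisym)

lemma finite_Dn: "finite (Dn h)"
proof -
  have "Dn h \<subseteq> {..h}" using bit_le_imp_le by (auto simp: Dn_def)
  then show ?thesis by (rule finite_subset) auto
qed

lemma finite_chs: "finite X \<Longrightarrow> finite (chs X)"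
  by (rule finite_subset[of _ "Pow X"]) (auto simp: chs_def)

lemma chs_finite_mem: "finite X \<Longrightarrow> C \<in> chs X \<Longrightarrow> finite C"
  by (auto simp: chs_def intro: finite_subset)

lemma cc_self:
  assumes h: "h \<ge> 1"
  shows "cc t (Dn h) = (1 + t) * cc t (Dn h - {h})"
proof -
  let ?A = "chs (Dn h - {h})"
  have fA: "finite ?A" by (intro finite_chs) (simp add: finite_Dn)
  have hD: "h \<in> Dn h" using h by (simp add: Dn_def bit_le_refl')
  have eq: "chs (Dn h) = ?A \<union> insert h ` ?A"
  proof (intro equalityI subsetI)
    fix C assume C: "C \<in> chs (Dn h)"
    show "C \<in> ?A \<union> insert h ` ?A"
    proof (cases "h \<in> C")
      case False then have "C \<in> ?A" using C by (auto simp: chs_def)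
      then show ?thesis by blast
    next
      case True
      then have "C - {h} \<in> ?A" "C = insert h (C - {h})" using C by (auto simp: chs_def)
      then show ?thesis by blast
    qed
  next
    fix C assume "C \<in> ?A \<union> insert h ` ?A"
    then show "C \<in> chs (Dn h)"
      using hD by (auto simp: chs_def Dn_def bit_le_refl')
  qed
  have disj: "?A \<inter> insert h ` ?A = {}" by (auto simp: chs_def)
  have inj: "inj_on (insert h) ?A" by (rule inj_onI) (auto simp: chs_def)
  have "cc t (Dn h) = (\<Sum>C\<in>?A. t ^ card C) + (\<Sum>C\<in>insert h ` ?A. t ^ card C)"
    unfolding cc_def eq by (rule sum.union_disjoint) (use fA disj in auto)
  also have "(\<Sum>C\<in>insert h ` ?A. t ^ card C) = (\<Sum>C\<in>?A. t ^ card (insert h C))"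
    by (rule sum.reindex[OF inj, unfolded o_def])
  also have "\<dots> = (\<Sum>C\<in>?A. t * t ^ card C)"
  proof (intro sum.cong refl)
    fix C assume "C \<in> ?A"
    then have "finite C" "h \<notin> C" using finite_Dn by (auto simp: chs_def intro: finite_subset)
    then show "t ^ card (insert h C) = t * t ^ card C" by simp
  qed
  finally show ?thesis unfolding cc_def by (simp add: sum_distrib_left sum.distrib algebra_simps)
qed

lemma cc_rec:
  "cc t (Dn h) = 1 + t * (\<Sum>l\<in>Dn h. cc t (Dn l - {l}))"
proof -
  let ?S = "chs (Dn h)"
  have fS: "finite ?S" by (intro finite_chs finite_Dn)
  have e: "{} \<in> ?S" by (simp add: chs_def)
  have "cc t (Dn h) = t ^ card ({}::nat set) + (\<Sum>C\<in>?S - {{}}. t ^ card C)"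
    unfolding cc_def using sum.remove[OF fS e, of "\<lambda>C. t ^ card C"] by simp
  also have "(\<Sum>C\<in>?S - {{}}. t ^ card C) = (\<Sum>l\<in>Dn h. \<Sum>C\<in>{C\<in>?S - {{}}. Max C = l}. t ^ card C)"
  proof (rule sum.group[symmetric])
    show "finite (?S - {{}})" using fS by simp
    show "finite (Dn h)" by (rule finite_Dn)
    show "Max ` (?S - {{}}) \<subseteq> Dn h"
    proof
      fix l assume "l \<in> Max ` (?S - {{}})"
      then obtain C where C: "C \<in> ?S" "C \<noteq> {}" "l = Max C" by blast
      then have "finite C" using chs_finite_mem[OF finite_Dn] by blast
      then have "Max C \<in> C" using C(2) by simp
      then show "l \<in> Dn h" using C by (auto simp: chs_def)
    qed
  qed
  also have "\<dots> = (\<Sum>l\<in>Dn h. t * cc t (Dn l - {l}))"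
  proof (intro sum.cong refl)
    fix l assume lD: "l \<in> Dn h"
    have fDl: "finite (Dn l - {l})" using finite_Dn by blast
    have "(\<Sum>C\<in>{C\<in>?S - {{}}. Max C = l}. t ^ card C) = (\<Sum>C'\<in>chs (Dn l - {l}). t ^ card (insert l C'))"
    proof (rule sum.reindex_bij_witness[of _ "insert l" "\<lambda>C. C - {l}"])
      fix C' assume C': "C' \<in> chs (Dn l - {l})"
      then have fC': "finite C'" using chs_finite_mem[OF fDl] by blast
      have le: "bit_le a l" "a \<noteq> l" "1 \<le> a" if "a \<in> C'" for a
        using C' that by (auto simp: chs_def Dn_def)
      show "insert l C' - {l} = C'" using le by auto
      have "insert l C' \<in> ?S"
        using C' lD le by (auto simp: chs_def Dn_def bit_le_refl' intro: bit_le_trans)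
      moreover have "Max (insert l C') = l"
        by (rule Max_eqI) (use fC' le bit_le_imp_le in auto)
      ultimately show "insert l C' \<in> {C\<in>?S - {{}}. Max C = l}" by auto
    next
      fix C assume C: "C \<in> {C\<in>?S - {{}}. Max C = l}"
      then have fC: "finite C" "C \<noteq> {}" "C \<in> ?S" "Max C = l" using chs_finite_mem[OF finite_Dn] by auto
      then have lC: "l \<in> C" using Max_in by blast
      show "insert l (C - {l}) = C" using lC by auto
      show "t ^ card (insert l (C - {l})) = t ^ card C" using lC by (simp add: insert_absorb)
      have "a \<in> Dn l - {l}" if aC: "a \<in> C" "a \<noteq> l" for a
      proof -
        have a1: "1 \<le> a" using aC fC by (auto simp: chs_def Dn_def)
        have "a \<le> l" using fC aC Max_ge by blast
        have "bit_le a l \<or> bit_le l a" using fC aC lC by (auto simp: chs_def)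
        then have "bit_le a l" using \<open>a \<le> l\<close> aC bit_le_imp_le by fastforce
        then show ?thesis using a1 aC by (simp add: Dn_def)
      qed
      then show "C - {l} \<in> chs (Dn l - {l})" using fC by (auto simp: chs_def)
    qed
    also have "\<dots> = (\<Sum>C'\<in>chs (Dn l - {l}). t * t ^ card C')"
    proof (intro sum.cong refl)
      fix C' assume C': "C' \<in> chs (Dn l - {l})"
      then have "finite C'" "l \<notin> C'" using chs_finite_mem[OF fDl] by (auto simp: chs_def)
      then show "t ^ card (insert l C') = t * t ^ card C'" by simp
    qed
    finally show "(\<Sum>C\<in>{C\<in>?S - {{}}. Max C = l}. t ^ card C) = t * cc t (Dn l - {l})"
      by (simp add: cc_def sum_distrib_left)
  qed
  finally show ?thesis by (simp add: sum_distrib_left)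
qed

lemma cc_rec2:
  assumes t: "t \<ge> 0"
  shows "cc t (Dn h) = 1 + (t / (1 + t)) * (\<Sum>l\<in>Dn h. cc t (Dn l))"
proof -
  have "cc t (Dn l - {l}) = cc t (Dn l) / (1 + t)" if "l \<in> Dn h" for l
  proof -
    have "l \<ge> 1" using that by (simp add: Dn_def)
    then show ?thesis using cc_self[of l t] t by (simp add: field_simps)
  qed
  then have "(\<Sum>l\<in>Dn h. cc t (Dn l - {l})) = (\<Sum>l\<in>Dn h. cc t (Dn l)) / (1 + t)"
    by (simp add: sum_divide_distrib)
  then show ?thesis using cc_rec[of t h] by simp
qed

lemma bit_imp_lt: "bit (n::nat) j \<Longrightarrow> j < n"
proof -
  assume b: "bit n j"
  have "2 ^ j \<le> n"
  proof (rule ccontr)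
    assume "\<not> 2 ^ j \<le> n"
    then have "n div 2 ^ j = 0" by simp
    then show False using b by (simp add: bit_iff_odd)
  qed
  moreover have "j < 2 ^ j" by (rule less_exp)
  ultimately show ?thesis using less_le_trans by blast
qed

lemma finite_bits: "finite (bits h)"
  by (rule finite_subset[of _ "{..<h}"]) (auto simp: bits_def bit_imp_lt)

lemma bits_inj: "bits a = bits b \<Longrightarrow> a = (b::nat)"
  by (rule bit_eqI) (auto simp: bits_def set_eq_iff)

lemma bits_0: "bits 0 = {}" by (simp add: bits_def)

lemma bits_empty_iff: "bits a = {} \<longleftrightarrow> a = 0"
  using bits_inj[of a 0] bits_0 by auto

lemma bit_le_bits: "bit_le a b \<longleftrightarrow> bits a \<subseteq> bits b"
  by (auto simp: bit_le_def bits_def)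

lemma exists_bits:
  assumes "finite S"
  shows "\<exists>l::nat. bits l = S"
proof -
  obtain M where M: "S \<subseteq> {..<M}"
    using assms finite_nat_bounded by blast
  define l :: nat where "l = horner_sum of_bool 2 (map (\<lambda>j. j \<in> S) [0..<M])"
  have "bit l j \<longleftrightarrow> j \<in> S" for j
    using M unfolding l_def bit_horner_sum_bit_iff by (auto simp: nth_map)
  then show ?thesis by (auto simp: bits_def)
qed

lemma sum_Pow_card:
  fixes F :: "nat \<Rightarrow> real"
  assumes B: "finite B"
  shows "(\<Sum>S\<in>Pow B. F (card S)) = (\<Sum>j\<le>card B. real (card B choose j) * F j)"
proof -
  have "(\<Sum>S\<in>Pow B. F (card S)) = (\<Sum>j\<le>card B. \<Sum>S\<in>{S\<in>Pow B. card S = j}. F (card S))"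
  proof (rule sum.group[symmetric])
    show "finite (Pow B)" using B by simp
    show "finite {..card B}" by simp
    show "card ` Pow B \<subseteq> {..card B}" using B by (auto intro: card_mono)
  qed
  also have "\<dots> = (\<Sum>j\<le>card B. real (card B choose j) * F j)"
  proof (intro sum.cong refl)
    fix j
    have "{S\<in>Pow B. card S = j} = {S. S \<subseteq> B \<and> card S = j}" by auto
    then have c: "card {S\<in>Pow B. card S = j} = card B choose j" using n_subsets[OF B] by simp
    have "(\<Sum>S\<in>{S\<in>Pow B. card S = j}. F (card S)) = (\<Sum>S\<in>{S\<in>Pow B. card S = j}. F j)"
      by (intro sum.cong) auto
    also have "\<dots> = real (card B choose j) * F j" using c by simp
    finally show "(\<Sum>S\<in>{S\<in>Pow B. card S = j}. F (card S)) = real (card B choose j) * F j" .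
  qed
  finally show ?thesis .
qed

lemma count_Dn:
  fixes f :: "nat \<Rightarrow> real"
  assumes h: "h \<ge> 1"
  shows "(\<Sum>l\<in>Dn h - {h}. f (card (bits l))) =
         (\<Sum>j\<in>{1..<card (bits h)}. real (card (bits h) choose j) * f j)"
proof -
  define B where "B = bits h"
  define m where "m = card B"
  have fB: "finite B" by (simp add: B_def finite_bits)
  have bij: "bij_betw bits (Dn h - {h}) (Pow B - {{}, B})"
  proof (rule bij_betw_imageI)
    show "inj_on bits (Dn h - {h})" by (rule inj_onI) (rule bits_inj)
    show "bits ` (Dn h - {h}) = Pow B - {{}, B}"
    proof (intro equalityI subsetI)
      fix S assume "S \<in> bits ` (Dn h - {h})"
      then obtain l where l: "l \<in> Dn h" "l \<noteq> h" "S = bits l" by blast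
      then have "bits l \<subseteq> B" "bits l \<noteq> {}" "bits l \<noteq> B"
        using bits_empty_iff bits_inj by (auto simp: Dn_def B_def bit_le_bits)
      then show "S \<in> Pow B - {{}, B}" using l by auto
    next
      fix S assume S: "S \<in> Pow B - {{}, B}"
      then have "finite S" using fB finite_subset by auto
      then obtain l where l: "bits l = S" using exists_bits by blast
      have "l \<noteq> 0" using l S bits_0 by auto
      moreover have "bit_le l h" using l S by (simp add: bit_le_bits B_def)
      moreover have "l \<noteq> h" using l S by (auto simp: B_def)
      ultimately show "S \<in> bits ` (Dn h - {h})" using l by (auto simp: Dn_def)
    qed
  qed
  define F where "F j = (if 1 \<le> j \<and> j < m then f j else 0)" for j
  have "(\<Sum>l\<in>Dn h - {h}. f (card (bits l))) = (\<Sum>S\<in>Pow B - {{}, B}. f (card S))"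
    using sum.reindex_bij_betw[OF bij, of "\<lambda>S. f (card S)"] by simp
  also have "\<dots> = (\<Sum>S\<in>Pow B - {{}, B}. F (card S))"
  proof (intro sum.cong refl)
    fix S assume S: "S \<in> Pow B - {{}, B}"
    then have fS: "finite S" using fB finite_subset by auto
    have "card S \<ge> 1" using S fS by (auto simp: Suc_le_eq card_gt_0_iff)
    moreover have "card S < m" unfolding m_def using S fB by (intro psubset_card_mono) auto
    ultimately show "f (card S) = F (card S)" by (simp add: F_def)
  qed
  also have "\<dots> = (\<Sum>S\<in>Pow B. F (card S))"
  proof (rule sum.mono_neutral_left)
    show "finite (Pow B)" using fB by simp
    show "Pow B - {{}, B} \<subseteq> Pow B" by auto
    show "\<forall>i\<in>Pow B - (Pow B - {{}, B}). F (card i) = 0" by (auto simp: F_def m_def)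
  qed
  also have "\<dots> = (\<Sum>j\<le>m. real (m choose j) * F j)" unfolding m_def by (rule sum_Pow_card[OF fB])
  also have "\<dots> = (\<Sum>j\<le>m. if j \<in> {1..<m} then real (m choose j) * f j else 0)"
    by (intro sum.cong) (auto simp: F_def)
  also have "\<dots> = (\<Sum>j\<in>{..m} \<inter> {1..<m}. real (m choose j) * f j)"
    by (rule sum.inter_restrict[symmetric]) simp
  also have "{..m} \<inter> {1..<m} = {1..<m}" by auto
  finally show ?thesis by (simp add: B_def m_def)
qed

lemma summable_npow_geom:
  fixes x :: real
  assumes "norm x < 1"
  shows "summable (\<lambda>n. real n ^ m * x ^ n)"
  using assms
proof (induction m arbitrary: x)
  case 0 then show ?case by (simp add: summable_geometric)
next
  case (Suc m)
  have "summable (\<lambda>n. diffs (\<lambda>n. real n ^ m) n * x ^ n)"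
    by (rule termdiff_converges[of x 1]) (use Suc in auto)
  then have "summable (\<lambda>n. real (Suc n) ^ Suc m * x ^ n)"
    by (simp add: diffs_def)
  then show ?case
    using summable_powser_split_head[of "\<lambda>n. real n ^ Suc m" x] by simp
qed

lemma summable_Qs:
  fixes x :: real
  assumes "0 \<le> x" "x < 1"
  shows "summable (\<lambda>k. real (k + 1) ^ m * x ^ k)"
proof -
  have "summable (\<lambda>n. real n ^ m * x ^ n)" by (rule summable_npow_geom) (use assms in auto)
  then show ?thesis using summable_powser_split_head[of "\<lambda>n. real n ^ m" x] by simp
qed

definition Q :: "real \<Rightarrow> nat \<Rightarrow> real" where
  "Q x m = (1 - x) * (\<Sum>k. real (k + 1) ^ m * x ^ k)"

lemma Q0: "0 \<le> x \<Longrightarrow> x < 1 \<Longrightarrow> Q x 0 = 1"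
  unfolding Q_def by (simp add: suminf_geometric)

lemma Q_binom:
  fixes x :: real
  assumes x: "0 \<le> x" "x < 1"
  shows "x * (\<Sum>j\<le>m. real (m choose j) * Q x j) = Q x m - (1 - x)"
proof -
  let ?g = "\<lambda>k. real (k + 1) ^ m * x ^ k"
  have sj: "summable (\<lambda>k. real (m choose j) * (real (k + 1) ^ j * x ^ k))" for j
    by (intro summable_mult summable_Qs x)
  have e: "real (m choose j) * Q x j = (1 - x) * (\<Sum>k. real (m choose j) * (real (k + 1) ^ j * x ^ k))" for j
    unfolding Q_def suminf_mult[OF summable_Qs[OF x, of j]] by (simp add: algebra_simps)
  have "(\<Sum>j\<le>m. real (m choose j) * Q x j) = (1 - x) * (\<Sum>j\<le>m. \<Sum>k. real (m choose j) * (real (k + 1) ^ j * x ^ k))"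
    unfolding e by (simp add: sum_distrib_left)
  also have "(\<Sum>j\<le>m. \<Sum>k. real (m choose j) * (real (k + 1) ^ j * x ^ k)) =
             (\<Sum>k. \<Sum>j\<le>m. real (m choose j) * (real (k + 1) ^ j * x ^ k))"
    by (rule suminf_sum[symmetric]) (rule sj)
  also have "\<dots> = (\<Sum>k. real (k + 2) ^ m * x ^ k)"
  proof (intro suminf_cong)
    fix k
    have "real (k + 2) ^ m = (real (k + 1) + 1) ^ m" by simp
    also have "\<dots> = (\<Sum>j\<le>m. real (m choose j) * real (k + 1) ^ j)"
      by (subst binomial_ring) simp
    finally show "(\<Sum>j\<le>m. real (m choose j) * (real (k + 1) ^ j * x ^ k)) = real (k + 2) ^ m * x ^ k"
      by (simp add: sum_distrib_right mult.assoc)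
  qed
  finally have A: "(\<Sum>j\<le>m. real (m choose j) * Q x j) = (1 - x) * (\<Sum>k. real (k + 2) ^ m * x ^ k)" .
  have "x * (\<Sum>k. real (k + 2) ^ m * x ^ k) = (\<Sum>k. ?g (Suc k))"
  proof -
    have "summable (\<lambda>k. ?g (Suc k))" using summable_Qs[OF x, of m] by (subst summable_Suc_iff)
    then have "(\<Sum>k. ?g (Suc k)) = (\<Sum>k. x * (real (k + 2) ^ m * x ^ k))"
      by (intro suminf_cong) (simp add: algebra_simps)
    also have "\<dots> = x * (\<Sum>k. real (k + 2) ^ m * x ^ k)"
    proof (rule suminf_mult)
      have "summable (\<lambda>k. ?g (Suc k))" using summable_Qs[OF x, of m] by (subst summable_Suc_iff)
      have "summable (\<lambda>k. real (Suc k + 1) ^ m * x ^ k)"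
        using summable_powser_split_head[of "\<lambda>k. real (k + 1) ^ m" x] summable_Qs[OF x, of m] by simp
      then show "summable (\<lambda>k. real (k + 2) ^ m * x ^ k)" by (simp add: add.commute)
    qed
    finally show ?thesis by simp
  qed
  also have "\<dots> = (\<Sum>k. ?g k) - ?g 0" by (rule suminf_split_head[OF summable_Qs[OF x]])
  finally have B: "x * (\<Sum>k. real (k + 2) ^ m * x ^ k) = (\<Sum>k. ?g k) - 1" by simp
  have "x * (\<Sum>j\<le>m. real (m choose j) * Q x j) = x * ((1 - x) * (\<Sum>k. real (k + 2) ^ m * x ^ k))"
    by (simp only: A)
  also have "\<dots> = (1 - x) * (x * (\<Sum>k. real (k + 2) ^ m * x ^ k))" by (simp only: mult.left_commute)
  also have "\<dots> = (1 - x) * ((\<Sum>k. ?g k) - 1)" by (simp only: B)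
  also have "\<dots> = Q x m - (1 - x)" unfolding Q_def by (simp add: algebra_simps)
  finally show ?thesis .
qed

lemma Q_rec:
  fixes x :: real
  assumes x: "0 \<le> x" "x < 1" and m: "m \<ge> 1"
  shows "(1 - x) * Q x m = 1 + x * (\<Sum>j\<in>{1..<m}. real (m choose j) * Q x j)"
proof -
  have "{..m} = insert 0 (insert m {1..<m})" using m by auto
  then have "(\<Sum>j\<le>m. real (m choose j) * Q x j) = Q x 0 + (Q x m + (\<Sum>j\<in>{1..<m}. real (m choose j) * Q x j))"
    using m by simp
  then show ?thesis using Q_binom[OF x, of m] Q0[OF x] by (simp add: algebra_simps)
qed

lemma cc_Q:
  fixes x :: real
  assumes x: "0 < x" "x < 1"
  shows "cc (x / (1 - x)) (Dn h) = Q x (card (bits h))"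
proof (induction h rule: less_induct)
  case (less h)
  define t where "t = x / (1 - x)"
  have t0: "t \<ge> 0" using x by (simp add: t_def)
  have tx: "t / (1 + t) = x" using x by (simp add: t_def field_simps)
  have rec: "cc t (Dn h) = 1 + x * (\<Sum>l\<in>Dn h. cc t (Dn l))"
    using cc_rec2[OF t0, of h] tx by simp
  show ?case
  proof (cases "h = 0")
    case True
    have "Dn 0 = {}" using bit_le_imp_le by (force simp: Dn_def)
    then show ?thesis using True rec Q0 x by (simp add: t_def bits_0)
  next
    case False
    then have h1: "h \<ge> 1" by simp
    have hD: "h \<in> Dn h" using h1 by (simp add: Dn_def bit_le_refl')
    have "(\<Sum>l\<in>Dn h. cc t (Dn l)) = cc t (Dn h) + (\<Sum>l\<in>Dn h - {h}. cc t (Dn l))"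
      by (rule sum.remove[OF finite_Dn hD])
    also have "(\<Sum>l\<in>Dn h - {h}. cc t (Dn l)) = (\<Sum>l\<in>Dn h - {h}. Q x (card (bits l)))"
    proof (intro sum.cong refl)
      fix l assume l: "l \<in> Dn h - {h}"
      then have "l < h" using bit_le_imp_le by (force simp: Dn_def)
      then show "cc t (Dn l) = Q x (card (bits l))" using less.IH t_def by simp
    qed
    also have "\<dots> = (\<Sum>j\<in>{1..<card (bits h)}. real (card (bits h) choose j) * Q x j)"
      by (rule count_Dn[OF h1])
    finally have sumeq: "(\<Sum>l\<in>Dn h. cc t (Dn l)) = cc t (Dn h) + (\<Sum>j\<in>{1..<card (bits h)}. real (card (bits h) choose j) * Q x j)" .
    define c where "c = cc t (Dn h)"
    define S where "S = (\<Sum>j\<in>{1..<card (bits h)}. real (card (bits h) choose j) * Q x j)"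
    have eq1: "c = 1 + x * (c + S)" using rec sumeq unfolding c_def S_def by metis
    have eq2: "c = 1 + x * c + x * S" using eq1 by (simp only: distrib_left add.assoc)
    have eq3: "(1 - x) * c = c - x * c" by (simp add: left_diff_distrib)
    have "(1 - x) * cc t (Dn h) = 1 + x * (\<Sum>j\<in>{1..<card (bits h)}. real (card (bits h) choose j) * Q x j)"
      using eq2 eq3 unfolding c_def S_def by linarith
    also have "\<dots> = (1 - x) * Q x (card (bits h))"
    proof -
      have "card (bits h) \<ge> 1"
        using False bits_empty_iff finite_bits by (simp add: Suc_le_eq card_gt_0_iff)
      then show ?thesis using Q_rec[of x "card (bits h)"] x by simp
    qed
    finally show ?thesis using x by (simp add: t_def)
  qed
qed

lemma bit_mask_nat: "bit ((2::nat) ^ n - 1) j \<longleftrightarrow> j < n"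
proof -
  have eq: "(2::nat) ^ n - 1 = mask n" by (simp add: mask_eq_exp_minus_1)
  show ?thesis unfolding eq by (simp add: bit_mask_iff)
qed

lemma bits_mask: "bits ((2::nat) ^ n - 1) = {..<n}"
  unfolding bits_def by (rule set_eqI) (simp only: mem_Collect_eq lessThan_iff bit_mask_nat)

lemma bits_lt_iff: "(\<forall>j. bit (l::nat) j \<longrightarrow> j < n) \<longleftrightarrow> l < 2 ^ n"
proof
  assume a: "\<forall>j. bit l j \<longrightarrow> j < n"
  have "take_bit n l = l" by (rule bit_eqI) (use a in \<open>auto simp: bit_take_bit_iff\<close>)
  then show "l < 2 ^ n" by (simp add: take_bit_nat_eq_self_iff)
next
  assume "l < 2 ^ n"
  then have t: "take_bit n l = l" by (simp add: take_bit_nat_eq_self_iff)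
  show "\<forall>j. bit l j \<longrightarrow> j < n"
  proof (intro allI impI)
    fix j assume "bit l j"
    then have "bit (take_bit n l) j" using t by simp
    then show "j < n" by (simp add: bit_take_bit_iff)
  qed
qed

lemma Dn_mask: "Dn ((2::nat) ^ n - 1) = {1..2 ^ n - 1}"
proof -
  have A: "bit_le l (2 ^ n - 1) \<longleftrightarrow> l < 2 ^ n" for l
    using bits_lt_iff[of l n] unfolding bit_le_def bit_mask_nat .
  have B: "(l::nat) < 2 ^ n \<longleftrightarrow> l \<le> 2 ^ n - 1" for l
    using one_le_power[of "2::nat" n] by linarith
  show ?thesis
  proof (rule set_eqI)
    fix l show "l \<in> Dn (2 ^ n - 1) \<longleftrightarrow> l \<in> {1..2 ^ n - 1}"
      unfolding Dn_def mem_Collect_eq atLeastAtMost_iff A B ..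
  qed
qed

lemma chs_ichain: "chs {1..N} = {C. ichain N C}"
  by (auto simp: chs_def ichain_def)

lemma Lpoly_cong:
  assumes "\<And>h. h \<in> {1..N} \<Longrightarrow> y h = y' h"
  shows "Lpoly N y = Lpoly N y'"
  unfolding Lpoly_def
proof (intro sum.cong refl arg_cong2[where f = "(*)"] prod.cong)
  fix C h assume "C \<in> {C. ichain N C}" "h \<in> C"
  then show "y h = y' h" using assms by (auto simp: ichain_def)
next
  fix C h assume "h \<in> {1..N} - C"
  then show "1 - y h = 1 - y' h" using assms by auto
qed

lemma Lpoly_const:
  "Lpoly N (\<lambda>_. complex_of_real x) =
     complex_of_real (\<Sum>C\<in>{C. ichain N C}. x ^ card C * (1 - x) ^ (N - card C))"
  unfolding Lpoly_def of_real_sum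
proof (intro sum.cong refl)
  fix C assume "C \<in> {C. ichain N C}"
  then have CI: "C \<subseteq> {1..N}" by (auto simp: ichain_def)
  have "card ({1..N} - C) = N - card C" using CI by (subst card_Diff_subset) (auto intro: finite_subset)
  then show "(\<Prod>h\<in>C. complex_of_real x) * (\<Prod>h\<in>{1..N} - C. 1 - complex_of_real x) =
      complex_of_real (x ^ card C * (1 - x) ^ (N - card C))"
    by simp
qed

lemma const_sum_cc:
  fixes x :: real
  assumes x: "0 < x" "x < 1"
  shows "(\<Sum>C\<in>{C. ichain N C}. x ^ card C * (1 - x) ^ (N - card C)) = (1 - x) ^ N * cc (x / (1 - x)) {1..N}"
  unfolding cc_def chs_ichain sum_distrib_left
proof (intro sum.cong refl)
  fix C assume "C \<in> {C. ichain N C}"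
  then have CI: "C \<subseteq> {1..N}" by (auto simp: ichain_def)
  then have "card C \<le> N" using card_mono[OF finite_atLeastAtMost CI] by simp
  then have "(1 - x) ^ N = (1 - x) ^ card C * (1 - x) ^ (N - card C)"
    by (simp flip: power_add)
  moreover have "(1 - x) ^ card C * (x / (1 - x)) ^ card C = x ^ card C"
    using x by (simp flip: power_mult_distrib)
  ultimately show "x ^ card C * (1 - x) ^ (N - card C) = (1 - x) ^ N * (x / (1 - x)) ^ card C"
    by (simp add: algebra_simps)
qed

lemma cpow_minus_one: "p > 0 \<Longrightarrow> (of_nat p :: complex) powr (- 1) = complex_of_real (1 / real p)"
  by (simp add: cpow_eq exp_minus exp_of_real divide_inverse)

lemma Lfac_one:
  assumes n: "n \<ge> 1" and p: "prime p"
  shows "Lfac (2 ^ n - 1) (one_point (2 ^ n - 1)) p =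
         complex_of_real ((1 - 1 / real p) ^ (2 ^ n - 1) * Q (1 / real p) n)"
proof -
  define N where "N = (2::nat) ^ n - 1"
  define x where "x = 1 / real p"
  have p1: "real p > 1" using p prime_gt_1_nat by auto
  have x: "0 < x" "x < 1" using p1 by (auto simp: x_def)
  have "Lfac N (one_point N) p = Lpoly N (\<lambda>_. complex_of_real x)"
    unfolding Lfac_def using p
  proof (simp, intro Lpoly_cong)
    fix h assume "h \<in> {1..N}"
    then show "of_nat p powr (- one_point N h) = complex_of_real x"
      using p cpow_minus_one[of p] prime_gt_0_nat by (simp add: one_point_def x_def)
  qed
  also have "\<dots> = complex_of_real ((1 - x) ^ N * cc (x / (1 - x)) {1..N})"
    unfolding Lpoly_const const_sum_cc[OF x] ..
  also have "cc (x / (1 - x)) {1..N} = Q x n"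
    using cc_Q[OF x, of N] unfolding N_def Dn_mask bits_mask by simp
  finally show ?thesis by (simp add: N_def x_def)
qed

lemma euler_eq:
  assumes n: "n \<ge> 1" and p: "prime p"
  shows "euler_factor n p = (1 - 1 / real p) ^ (2 ^ n - 1) * Q (1 / real p) n"
proof -
  define x where "x = 1 / real p"
  have p1: "real p > 1" using p prime_gt_1_nat by auto
  have x: "0 \<le> x" "x < 1" using p1 by (auto simp: x_def)
  define a where "a k = (real (k + 1) ^ n - real k ^ n) * x ^ k" for k
  have s1: "summable (\<lambda>k. real (k + 1) ^ n * x ^ k)" by (rule summable_Qs[OF x])
  have s2: "summable (\<lambda>k. real k ^ n * x ^ k)" by (rule summable_npow_geom) (use x in auto)
  have sa: "summable a" unfolding a_def left_diff_distrib by (intro summable_diff s1 s2)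
  have sh: "(\<Sum>k. real (Suc k) ^ n * x ^ Suc k) = (\<Sum>k. real k ^ n * x ^ k) - real 0 ^ n * x ^ 0"
    using suminf_split_head[OF s2] by simp
  have z: "real 0 ^ n * x ^ 0 = (0::real)" using n by simp
  have "(\<Sum>k. real k ^ n * x ^ k) = (\<Sum>k. real (Suc k) ^ n * x ^ Suc k)" using sh z by simp
  also have "\<dots> = (\<Sum>k. x * (real (k + 1) ^ n * x ^ k))" by (intro suminf_cong) (simp add: algebra_simps)
  also have "\<dots> = x * (\<Sum>k. real (k + 1) ^ n * x ^ k)" by (rule suminf_mult[OF s1])
  finally have s2v: "(\<Sum>k. real k ^ n * x ^ k) = x * (\<Sum>k. real (k + 1) ^ n * x ^ k)" .
  have suma: "suminf a = Q x n"
  proof -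
    have "suminf a = (\<Sum>k. real (k + 1) ^ n * x ^ k) - (\<Sum>k. real k ^ n * x ^ k)"
      unfolding a_def left_diff_distrib by (rule suminf_diff[OF s1 s2, symmetric])
    then show ?thesis unfolding Q_def s2v by (simp add: algebra_simps)
  qed
  have a0: "a 0 = 1" using n by (simp add: a_def)
  have anneg: "a k \<ge> 0" for k
    using x by (auto simp: a_def intro!: mult_nonneg_nonneg power_mono)
  have "(\<lambda>k. a (Suc k)) sums (suminf a - a 0)"
    using sa by (subst sums_Suc_iff) (simp add: summable_sums)
  then have "((\<lambda>k. a (Suc k)) has_sum (suminf a - a 0)) UNIV"
    using anneg by (intro sums_nonneg_imp_has_sum) auto
  also have "?this \<longleftrightarrow> (a has_sum (suminf a - a 0)) {1..}"
    by (intro has_sum_reindex_bij_witness[of _ "\<lambda>n. n-1" "\<lambda>n. n+1"]) auto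
  finally have hs: "(a has_sum (suminf a - 1)) {1..}" unfolding a0 .
  have "(\<lambda>k. (real (k + 1) ^ n - real k ^ n) / real p ^ k) = a"
    by (rule ext) (simp add: a_def x_def power_one_over divide_inverse power_inverse)
  then have "(\<Sum>\<^sub>\<infinity>k\<in>{1::nat..}. (real (k + 1) ^ n - real k ^ n) / real p ^ k) = suminf a - 1"
    using infsumI[OF hs] by simp
  then show ?thesis unfolding euler_factor_def suma by (simp add: x_def)
qed

theorem mainTheorem14:
  fixes n :: nat
  assumes "n \<ge> 3"
  defines "N \<equiv> 2 ^ n - 1"
  shows "\<exists>Fc P. multi_holomorphic_on N Fc (1/2) \<and>
           (\<forall>s\<in>half_region N 1. Fc s = F_series N s) \<and>
           (\<lambda>p. if prime p then euler_factor n p else 1) has_prod P \<and>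
           Fc (one_point N) = complex_of_real P"
proof -
  have n1: "n \<ge> 1" using assms(1) by simp
  define e where "e p = (if prime p then euler_factor n p else 1)" for p
  have Le: "Lfac N (one_point N) k = complex_of_real (e k)" for k
  proof (cases "prime k")
    case True
    then show ?thesis unfolding N_def e_def using Lfac_one[OF n1 True] euler_eq[OF n1 True] by simp
  next
    case False
    then show ?thesis by (simp add: Lfac_def e_def)
  qed
  have ul: "uniform_limit {one_point N} (\<lambda>m x. \<Prod>k<m. Lfac N x k) (\<lambda>x. Fc N x) sequentially"
  proof (rule Fc_uconv[of 1])
    fix x h assume "x \<in> {one_point N}" "h \<in> {1..N}"
    then show "1 \<le> Re (x h)" by (simp add: one_point_def)
  qed simp
  have lim1: "(\<lambda>m. \<Prod>k<m. Lfac N (one_point N) k) \<longlonglongrightarrow> Fc N (one_point N)"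
    using tendsto_uniform_limitI[OF ul, of "one_point N"] by simp
  have bnd: "norm (e k - 1) \<le> 4 ^ N * real k powr (- 2 * 1)" for k
  proof -
    have "norm (Lfac N (one_point N) k - 1) \<le> 4 ^ N * real k powr (- 2 * 1)"
      by (rule Lfac_bound) (auto simp: one_point_def)
    moreover have "complex_of_real (e k) - 1 = complex_of_real (e k - 1)" by simp
    ultimately show ?thesis unfolding Le by (simp only: norm_of_real real_norm_def)
  qed
  have "summable (\<lambda>k. norm (e k - 1))"
    by (rule summable_comparison_test'[OF summable_M[of 1 N]]) (use bnd in auto)
  then have cp: "convergent_prod e"
    by (intro abs_convergent_prod_imp_convergent_prod summable_imp_abs_convergent_prod)
  have hp: "e has_prod prodinf e" using cp by (rule convergent_prod_has_prod)
  have "(\<lambda>m. \<Prod>i\<le>m. e i) \<longlonglongrightarrow> prodinf e" using cp by (rule convergent_prod_LIMSEQ)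
  then have "(\<lambda>m. complex_of_real (\<Prod>i\<le>m. e i)) \<longlonglongrightarrow> complex_of_real (prodinf e)"
    by (rule tendsto_of_real)
  moreover have "complex_of_real (\<Prod>i\<le>m. e i) = (\<Prod>k<Suc m. Lfac N (one_point N) k)" for m
    by (simp add: Le lessThan_Suc_atMost)
  ultimately have lim2: "(\<lambda>m. \<Prod>k<Suc m. Lfac N (one_point N) k) \<longlonglongrightarrow> complex_of_real (prodinf e)"
    by simp
  have "(\<lambda>m. \<Prod>k<Suc m. Lfac N (one_point N) k) \<longlonglongrightarrow> Fc N (one_point N)"
    using lim1 by (rule LIMSEQ_Suc)
  then have val: "Fc N (one_point N) = complex_of_real (prodinf e)"
    using lim2 LIMSEQ_unique by blast
  show ?thesis
  proof (intro exI conjI)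
    show "multi_holomorphic_on N (Fc N) (1/2)" by (rule Fc_multi_holo)
    show "\<forall>s\<in>half_region N 1. Fc N s = F_series N s" using Fc_eq_F by blast
    show "(\<lambda>p. if prime p then euler_factor n p else 1) has_prod prodinf e"
      using hp unfolding e_def .
    show "Fc N (one_point N) = complex_of_real (prodinf e)" by (rule val)
  qed
qed

end
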